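(* Let $E=(E^0,E^1,r,s)$ be a graph. (a) Let $k$ be a field. If $\alpha,\beta\in\partial E$ and there exists a nonzero $k$-linear map $T:V_{([\alpha],k)}\to V_{([\beta],k)}$ such that $T\circ\rho_{([\alpha],k)}(a)=\rho_{([\beta],k)}(a)\circ T$ for all $a\in L_k(E)$, then $[\alpha]=[\beta]$ and $T=z\,\mathrm{Id}_{V_{([\alpha],k)}}$ for some $z\in k$. Consequently, for any $\alpha,\beta\in\partial E$ with $[\alpha]\ne[\beta]$ we have $\mathrm{End}_{L_k(E)}V_{([\alpha],k)}\cong k$ and $\mathrm{Hom}_{L_k(E)}(V_{([\alpha],k)},V_{([\beta],k)})=\{0\}$. (b) If $\alpha,\beta\in\partial E$ and there exists a nonzero bounded linear map $T:\mathcal{H}_{[\alpha]}\to\mathcal{H}_{[\beta]}$ such that $T\circ\pi_{[\alpha]}(a)=\pi_{[\beta]}(a)\circ T$ for all $a\in C^*(E)$, then $[\alpha]=[\beta]$ and $T=z\,\mathrm{Id}_{\mathcal{H}_{[\alpha]}}$ for some $z\in\mathbb{C}$. Consequently, for any $\alpha,\beta\in\partial E$ with $[\alpha]\neq[\beta]$ we have $\mathrm{End}_{C^*(E)}\mathcal{H}_{[\alpha]}\cong\mathbb{C}$, $\mathrm{Unitary}_{C^*(E)}\mathcal{H}_{[\alpha]}\cong\mathbb{T}$, and $\mathrm{Hom}_{C^*(E)}(\mathcal{H}_{[\alpha]},\mathcal{H}_{[\beta]})=\{0\}$.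
   Context: A graph $E=(E^0,E^1,r,s)$ has vertex set $E^0$, edge set $E^1$, range and source maps; no countability assumed. A vertex is singular if it emits no edges or infinitely many edges, regular otherwise. Finite paths include vertices (length $0$) and sequences $e_1\cdots e_n$ with $r(e_i)=s(e_{i+1})$; infinite paths are sequences $e_1e_2\cdots$. Boundary paths $\partial E$: infinite paths together with finite paths whose range is singular. The shift $\sigma_E$ removes the first edge (fixes vertices; sends a single edge $e$ to $r(e)$); $\alpha,\beta\in\partial E$ are shift-tail equivalent if $\sigma_E^m(\alpha)=\sigma_E^n(\beta)$ for some $m,n\in\mathbb{N}$; $[\alpha]$ is the class. $L_k(E)$: universal $k$-algebra generated by pairwise orthogonal idempotents $p_v$ and elements $s_e,s_e^*$ with $p_{s(e)}s_e=s_e=s_ep_{r(e)}$, $p_{r(e)}s_e^*=s_e^*=s_e^*p_{s(e)}$, $s_e^*s_f=\delta_{e,f}p_{r(e)}$, $p_v=\sum_{s(e)=v}s_es_e^*$ for regular $v$. $C^*(E)$: universal $C^*$-algebra generated by mutually orthogonal projections $p_v$ and partial isometries $s_e$ with mutually orthogonal ranges, $s_e^*s_e=p_{r(e)}$, $s_es_e^*\le p_{s(e)}$, $p_v=\sum_{s(e)=v}s_es_e^*$ for regular $v$. $V_{(\partial E,k)}$ is the $k$-vector space with basis $\partial E$, $\mathcal{H}_{\partial E}=\ell^2(\partial E)$. $\rho_{E,k}$ and $\pi_E$ are the representations on these spaces given on $\alpha\in\partial E$ by: $p_v\alpha=\alpha$ if $s(\alpha)=v$, else $0$; $s_e\alpha=e\alpha$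 if $s(\alpha)=r(e)$, else $0$; $s_e^*\alpha=\alpha'$ if $\alpha=e\alpha'$, else $0$. $V_{([\alpha],k)}=\mathrm{span}_k[\alpha]$ and $\mathcal{H}_{[\alpha]}=\ell^2([\alpha])$ are invariant subspaces; $\rho_{([\alpha],k)}$ and $\pi_{[\alpha]}$ are the restrictions to them. $\mathrm{End}_{A}$, $\mathrm{Hom}_{A}$ denote (bounded, in the Hilbert case) linear maps intertwining the representations, and $\mathrm{Unitary}_{C^*(E)}\mathcal{H}_{[\alpha]}$ the group of intertwining unitaries; $\mathbb{T}=\{z\in\mathbb{C}:|z|=1\}$. *)

theory Defs
  imports "HOL-Analysis.Analysis"
begin

text \<open>A graph E = (V0, E1, r, s): vertex set V0, edge set E1 (arbitrary sets, no
countability), range and source maps r, s.  Paths of E are represented by the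
datatype below: FinP v es is the finite path with edge list es starting at v
(es = [] gives the vertex v, a path of length 0); InfP f is the infinite path
f 0, f 1, f 2, ...\<close>

datatype ('v,'e) gpath = FinP 'v "'e list" | InfP "nat \<Rightarrow> 'e"

definition regular_vertex :: "'e set \<Rightarrow> ('e \<Rightarrow> 'v) \<Rightarrow> 'v \<Rightarrow> bool" where
  "regular_vertex E1 s v \<longleftrightarrow> finite {e\<in>E1. s e = v} \<and> {e\<in>E1. s e = v} \<noteq> {}"

definition singular_vertex :: "'e set \<Rightarrow> ('e \<Rightarrow> 'v) \<Rightarrow> 'v \<Rightarrow> bool" where
  "singular_vertex E1 s v \<longleftrightarrow> \<not> regular_vertex E1 s v"

fun p_src :: "('e \<Rightarrow> 'v) \<Rightarrow> ('v,'e) gpath \<Rightarrow> 'v" where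
  "p_src s (FinP v es) = v"
| "p_src s (InfP f) = s (f 0)"

fun p_rng :: "('e \<Rightarrow> 'v) \<Rightarrow> ('v,'e) gpath \<Rightarrow> 'v" where
  "p_rng r (FinP v es) = (if es = [] then v else r (last es))"

definition fin_path :: "'v set \<Rightarrow> 'e set \<Rightarrow> ('e \<Rightarrow> 'v) \<Rightarrow> ('e \<Rightarrow> 'v) \<Rightarrow> 'v \<Rightarrow> 'e list \<Rightarrow> bool" where
  "fin_path V0 E1 r s v es \<longleftrightarrow> v \<in> V0 \<and> set es \<subseteq> E1 \<and> (es \<noteq> [] \<longrightarrow> s (hd es) = v)
     \<and> (\<forall>i. Suc i < length es \<longrightarrow> r (es ! i) = s (es ! Suc i))"

definition inf_path :: "'e set \<Rightarrow> ('e \<Rightarrow> 'v) \<Rightarrow> ('e \<Rightarrow> 'v) \<Rightarrow> (nat \<Rightarrow> 'e) \<Rightarrow> bool" where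
  "inf_path E1 r s f \<longleftrightarrow> (\<forall>i. f i \<in> E1 \<and> r (f i) = s (f (Suc i)))"

definition boundary_paths :: "'v set \<Rightarrow> 'e set \<Rightarrow> ('e \<Rightarrow> 'v) \<Rightarrow> ('e \<Rightarrow> 'v) \<Rightarrow> ('v,'e) gpath set" where
  "boundary_paths V0 E1 r s =
     {InfP f | f. inf_path E1 r s f}
     \<union> {FinP v es | v es. fin_path V0 E1 r s v es \<and> singular_vertex E1 s (p_rng r (FinP v es))}"

fun shift :: "('e \<Rightarrow> 'v) \<Rightarrow> ('v,'e) gpath \<Rightarrow> ('v,'e) gpath" where
  "shift r (FinP v []) = FinP v []"
| "shift r (FinP v (e # es)) = FinP (r e) es"
| "shift r (InfP f) = InfP (\<lambda>i. f (Suc i))"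

definition tail_equiv :: "('e \<Rightarrow> 'v) \<Rightarrow> ('v,'e) gpath \<Rightarrow> ('v,'e) gpath \<Rightarrow> bool" where
  "tail_equiv r \<alpha> \<beta> \<longleftrightarrow> (\<exists>m n. (shift r ^^ m) \<alpha> = (shift r ^^ n) \<beta>)"

definition tail_class :: "'v set \<Rightarrow> 'e set \<Rightarrow> ('e \<Rightarrow> 'v) \<Rightarrow> ('e \<Rightarrow> 'v) \<Rightarrow> ('v,'e) gpath \<Rightarrow> ('v,'e) gpath set" where
  "tail_class V0 E1 r s \<alpha> = {\<beta> \<in> boundary_paths V0 E1 r s. tail_equiv r \<alpha> \<beta>}"

fun prepend :: "('e \<Rightarrow> 'v) \<Rightarrow> 'e \<Rightarrow> ('v,'e) gpath \<Rightarrow> ('v,'e) gpath" where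
  "prepend s e (FinP v es) = FinP (s e) (e # es)"
| "prepend s e (InfP f) = InfP (case_nat e f)"

fun strip :: "('e \<Rightarrow> 'v) \<Rightarrow> 'e \<Rightarrow> ('v,'e) gpath \<Rightarrow> ('v,'e) gpath option" where
  "strip r e (FinP v []) = None"
| "strip r e (FinP v (e' # es)) = (if e' = e then Some (FinP (r e) es) else None)"
| "strip r e (InfP f) = (if f 0 = e then Some (InfP (\<lambda>i. f (Suc i))) else None)"

text \<open>The operators rho(p_v), rho(s_e), rho(s_e^*) (resp. pi(...)), written on
coefficient functions x : paths \<Rightarrow> scalars (x = sum of x(alpha) alpha).
They are the linear extensions of the action on the basis given in the paper.\<close>
definition op_p :: "('e \<Rightarrow> 'v) \<Rightarrow> 'v \<Rightarrow> (('v,'e) gpath \<Rightarrow> 'a::zero) \<Rightarrow> (('v,'e) gpath \<Rightarrow> 'a)" where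
  "op_p s v x = (\<lambda>\<beta>. if p_src s \<beta> = v then x \<beta> else 0)"

definition op_s :: "('e \<Rightarrow> 'v) \<Rightarrow> ('e \<Rightarrow> 'v) \<Rightarrow> 'e \<Rightarrow> (('v,'e) gpath \<Rightarrow> 'a::zero) \<Rightarrow> (('v,'e) gpath \<Rightarrow> 'a)" where
  "op_s r s e x = (\<lambda>\<beta>. case strip r e \<beta> of
       Some \<gamma> \<Rightarrow> (if \<beta> = prepend s e \<gamma> \<and> p_src s \<gamma> = r e then x \<gamma> else 0)
     | None \<Rightarrow> 0)"

definition op_sstar :: "('e \<Rightarrow> 'v) \<Rightarrow> ('e \<Rightarrow> 'v) \<Rightarrow> 'e \<Rightarrow> (('v,'e) gpath \<Rightarrow> 'a::zero) \<Rightarrow> (('v,'e) gpath \<Rightarrow> 'a)" where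
  "op_sstar r s e x = (\<lambda>\<gamma>. if p_src s \<gamma> = r e then x (prepend s e \<gamma>) else 0)"

text \<open>The image rho_{E,k}(L_k(E)) (resp. pi_E of the dense *-subalgebra of C*(E)):
the (non-unital) algebra generated by the generator operators.  Since the
generating set is closed under adjoints, this is also the generated *-algebra.\<close>
inductive_set gen_alg :: "'v set \<Rightarrow> 'e set \<Rightarrow> ('e \<Rightarrow> 'v) \<Rightarrow> ('e \<Rightarrow> 'v)
    \<Rightarrow> ((('v,'e) gpath \<Rightarrow> 'a::field) \<Rightarrow> (('v,'e) gpath \<Rightarrow> 'a)) set"
  for V0 E1 r s where
  gen_p: "v \<in> V0 \<Longrightarrow> op_p s v \<in> gen_alg V0 E1 r s"
| gen_s: "e \<in> E1 \<Longrightarrow> op_s r s e \<in> gen_alg V0 E1 r s"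
| gen_sstar: "e \<in> E1 \<Longrightarrow> op_sstar r s e \<in> gen_alg V0 E1 r s"
| gen_add: "a \<in> gen_alg V0 E1 r s \<Longrightarrow> b \<in> gen_alg V0 E1 r s \<Longrightarrow> (\<lambda>x p. a x p + b x p) \<in> gen_alg V0 E1 r s"
| gen_smult: "a \<in> gen_alg V0 E1 r s \<Longrightarrow> (\<lambda>x p. c * a x p) \<in> gen_alg V0 E1 r s"
| gen_comp: "a \<in> gen_alg V0 E1 r s \<Longrightarrow> b \<in> gen_alg V0 E1 r s \<Longrightarrow> a \<circ> b \<in> gen_alg V0 E1 r s"

definition span_space :: "'v set \<Rightarrow> 'e set \<Rightarrow> ('e \<Rightarrow> 'v) \<Rightarrow> ('e \<Rightarrow> 'v) \<Rightarrow> ('v,'e) gpath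
    \<Rightarrow> (('v,'e) gpath \<Rightarrow> 'a::zero) set" where
  "span_space V0 E1 r s \<alpha> = {x. finite {p. x p \<noteq> 0} \<and> {p. x p \<noteq> 0} \<subseteq> tail_class V0 E1 r s \<alpha>}"

definition l2_space :: "('v,'e) gpath set \<Rightarrow> (('v,'e) gpath \<Rightarrow> complex) set" where
  "l2_space A = {x. {p. x p \<noteq> 0} \<subseteq> A \<and> (\<lambda>p. (cmod (x p))\<^sup>2) summable_on UNIV}"

definition l2norm :: "('p \<Rightarrow> complex) \<Rightarrow> real" where
  "l2norm x = sqrt (infsum (\<lambda>p. (cmod (x p))\<^sup>2) UNIV)"

definition lin_map_on :: "('p \<Rightarrow> 'a::field) set \<Rightarrow> ('p \<Rightarrow> 'a) set \<Rightarrow> (('p \<Rightarrow> 'a) \<Rightarrow> ('p \<Rightarrow> 'a)) \<Rightarrow> bool" where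
  "lin_map_on A B T \<longleftrightarrow> (\<forall>x\<in>A. T x \<in> B)
     \<and> (\<forall>x\<in>A. \<forall>y\<in>A. T (\<lambda>p. x p + y p) = (\<lambda>p. T x p + T y p))
     \<and> (\<forall>c. \<forall>x\<in>A. T (\<lambda>p. c * x p) = (\<lambda>p. c * T x p))"

definition bounded_on :: "('p \<Rightarrow> complex) set \<Rightarrow> (('p \<Rightarrow> complex) \<Rightarrow> ('p \<Rightarrow> complex)) \<Rightarrow> bool" where
  "bounded_on A T \<longleftrightarrow> (\<exists>C. \<forall>x\<in>A. l2norm (T x) \<le> C * l2norm x)"

text \<open>pi_E(C*(E)): the operator-norm closure of pi_E of the generated *-algebra,
as bounded operators on ell^2(boundary paths).\<close>
definition cstar_image :: "'v set \<Rightarrow> 'e set \<Rightarrow> ('e \<Rightarrow> 'v) \<Rightarrow> ('e \<Rightarrow> 'v)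
    \<Rightarrow> ((('v,'e) gpath \<Rightarrow> complex) \<Rightarrow> (('v,'e) gpath \<Rightarrow> complex)) set" where
  "cstar_image V0 E1 r s =
     {a. lin_map_on (l2_space (boundary_paths V0 E1 r s)) (l2_space (boundary_paths V0 E1 r s)) a
       \<and> bounded_on (l2_space (boundary_paths V0 E1 r s)) a
       \<and> (\<forall>\<epsilon>>0. \<exists>b\<in>gen_alg V0 E1 r s. \<forall>x\<in>l2_space (boundary_paths V0 E1 r s).
             l2norm (\<lambda>p. a x p - b x p) \<le> \<epsilon> * l2norm x)}"

definition alg_Hom :: "'v set \<Rightarrow> 'e set \<Rightarrow> ('e \<Rightarrow> 'v) \<Rightarrow> ('e \<Rightarrow> 'v) \<Rightarrow> ('v,'e) gpath \<Rightarrow> ('v,'e) gpath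
    \<Rightarrow> ((('v,'e) gpath \<Rightarrow> 'a::field) \<Rightarrow> (('v,'e) gpath \<Rightarrow> 'a)) set" where
  "alg_Hom V0 E1 r s \<alpha> \<beta> = {T. lin_map_on (span_space V0 E1 r s \<alpha>) (span_space V0 E1 r s \<beta>) T
      \<and> (\<forall>a\<in>gen_alg V0 E1 r s. \<forall>x\<in>span_space V0 E1 r s \<alpha>. T (a x) = a (T x))
      \<and> T \<in> extensional (span_space V0 E1 r s \<alpha>)}"

definition cstar_Hom :: "'v set \<Rightarrow> 'e set \<Rightarrow> ('e \<Rightarrow> 'v) \<Rightarrow> ('e \<Rightarrow> 'v) \<Rightarrow> ('v,'e) gpath \<Rightarrow> ('v,'e) gpath
    \<Rightarrow> ((('v,'e) gpath \<Rightarrow> complex) \<Rightarrow> (('v,'e) gpath \<Rightarrow> complex)) set" where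
  "cstar_Hom V0 E1 r s \<alpha> \<beta> = {T. lin_map_on (l2_space (tail_class V0 E1 r s \<alpha>)) (l2_space (tail_class V0 E1 r s \<beta>)) T
      \<and> bounded_on (l2_space (tail_class V0 E1 r s \<alpha>)) T
      \<and> (\<forall>a\<in>cstar_image V0 E1 r s. \<forall>x\<in>l2_space (tail_class V0 E1 r s \<alpha>). T (a x) = a (T x))
      \<and> T \<in> extensional (l2_space (tail_class V0 E1 r s \<alpha>))}"

definition cstar_Unitary :: "'v set \<Rightarrow> 'e set \<Rightarrow> ('e \<Rightarrow> 'v) \<Rightarrow> ('e \<Rightarrow> 'v) \<Rightarrow> ('v,'e) gpath
    \<Rightarrow> ((('v,'e) gpath \<Rightarrow> complex) \<Rightarrow> (('v,'e) gpath \<Rightarrow> complex)) set" where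
  "cstar_Unitary V0 E1 r s \<alpha> = {T \<in> cstar_Hom V0 E1 r s \<alpha> \<alpha>.
      T ` l2_space (tail_class V0 E1 r s \<alpha>) = l2_space (tail_class V0 E1 r s \<alpha>)
      \<and> (\<forall>x\<in>l2_space (tail_class V0 E1 r s \<alpha>). l2norm (T x) = l2norm x)}"

end

theory Submission
  imports Defs
begin


definition delta :: "('v,'e) gpath \<Rightarrow> ('v,'e) gpath \<Rightarrow> 'a::{zero,one}" where
  "delta p = (\<lambda>q. if q = p then 1 else 0)"

fun edge_at :: "('v,'e) gpath \<Rightarrow> nat \<Rightarrow> 'e option" where
  "edge_at (FinP v es) i = (if i < length es then Some (es ! i) else None)"
| "edge_at (InfP f) i = Some (f i)"

lemma edge_at_shift: "edge_at (shift r p) i = edge_at p (Suc i)"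
  by (cases "(r,p)" rule: shift.cases) auto

lemma edge_at_None: "edge_at p 0 = None \<Longrightarrow> edge_at p i = None"
  by (cases p) (auto split: if_splits)

lemma edge_at_None_shift: "edge_at p 0 = None \<Longrightarrow> shift r p = p"
  by (cases "(r,p)" rule: shift.cases) auto

lemma neq_edge_at:
  assumes "p \<noteq> q"
  shows "p_src s p \<noteq> p_src s q \<or> (\<exists>i. edge_at p i \<noteq> edge_at q i)"
proof (rule ccontr)
  assume H: "\<not> ?thesis"
  hence src: "p_src s p = p_src s q" and ed: "\<And>i. edge_at p i = edge_at q i" by auto
  show False
  proof (cases p)
    case (FinP v es)
    show False
    proof (cases q)
      case (FinP w fs)
      have "length es = length fs"
      proof (rule ccontr)
        assume "length es \<noteq> length fs"
        then show False using ed[of "min (length es) (length fs)"] \<open>p = FinP v es\<close> FinP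
          by (auto simp: min_def split: if_splits)
      qed
      moreover have "\<And>i. i < length es \<Longrightarrow> es ! i = fs ! i"
        using ed \<open>p = FinP v es\<close> FinP calculation by (metis edge_at.simps(1) option.inject)
      ultimately have "es = fs" by (simp add: nth_equalityI)
      then show False using src assms \<open>p = FinP v es\<close> FinP by simp
    next
      case (InfP g)
      then show False using ed[of "length es"] \<open>p = FinP v es\<close> by simp
    qed
  next
    case (InfP f)
    show False
    proof (cases q)
      case (FinP w fs)
      then show False using ed[of "length fs"] \<open>p = InfP f\<close> by simp
    next
      case (InfP g)
      then show False using ed assms \<open>p = InfP f\<close> by auto
    qed
  qed
qed

lemma tail_equiv_refl: "tail_equiv r p p"
  unfolding tail_equiv_def by (rule exI[of _ 0], rule exI[of _ 0]) simp

lemma tail_equiv_sym: "tail_equiv r p q \<Longrightarrow> tail_equiv r q p"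
  unfolding tail_equiv_def by metis

lemma tail_equiv_trans:
  assumes "tail_equiv r p q" "tail_equiv r q u" shows "tail_equiv r p u"
proof -
  obtain a b where ab: "(shift r ^^ a) p = (shift r ^^ b) q" using assms(1) unfolding tail_equiv_def by blast
  obtain c d where cd: "(shift r ^^ c) q = (shift r ^^ d) u" using assms(2) unfolding tail_equiv_def by blast
  have "(shift r ^^ (c + a)) p = (shift r ^^ c) ((shift r ^^ a) p)" by (simp add: funpow_add)
  also have "\<dots> = (shift r ^^ c) ((shift r ^^ b) q)" using ab by simp
  also have "\<dots> = (shift r ^^ b) ((shift r ^^ c) q)"
    by (metis add.commute comp_apply funpow_add)
  also have "\<dots> = (shift r ^^ (b + d)) u" using cd by (simp add: funpow_add)
  finally show ?thesis unfolding tail_equiv_def by blast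
qed

lemma tail_equiv_shift: "tail_equiv r p (shift r p)"
  unfolding tail_equiv_def by (rule exI[of _ 1], rule exI[of _ 0]) simp

lemma strip_Some: "strip r e \<beta> = Some \<gamma> \<Longrightarrow> \<gamma> = shift r \<beta> \<and> edge_at \<beta> 0 = Some e"
  by (cases "(r,e,\<beta>)" rule: strip.cases) (auto split: if_splits)

lemma strip_None: "edge_at \<beta> 0 \<noteq> Some e \<Longrightarrow> strip r e \<beta> = None"
  by (cases "(r,e,\<beta>)" rule: strip.cases) (auto split: if_splits)

lemma shift_prepend: "p_src s \<gamma> = r e \<Longrightarrow> shift r (prepend s e \<gamma>) = \<gamma>"
  by (cases \<gamma>) auto

locale G =
  fixes V0 :: "'v set" and E1 :: "'e set" and r s :: "'e \<Rightarrow> 'v"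
  assumes rE: "r ` E1 \<subseteq> V0" and sE: "s ` E1 \<subseteq> V0"
begin

abbreviation bd where "bd \<equiv> boundary_paths V0 E1 r s"
abbreviation cls where "cls \<equiv> tail_class V0 E1 r s"

lemma bd_src: "p \<in> bd \<Longrightarrow> p_src s p \<in> V0"
  using sE unfolding boundary_paths_def fin_path_def inf_path_def by auto

lemma bd_edge0:
  assumes "p \<in> bd" "edge_at p 0 = Some e"
  shows "e \<in> E1 \<and> p = prepend s e (shift r p) \<and> p_src s (shift r p) = r e
     \<and> strip r e p = Some (shift r p) \<and> p_src s p = s e"
proof (cases p)
  case (FinP v es)
  then obtain es' where es: "es = e # es'" using assms(2) by (cases es) (auto split: if_splits)
  have fp: "fin_path V0 E1 r s v es" using assms(1) FinP unfolding boundary_paths_def by auto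
  then show ?thesis using FinP es unfolding fin_path_def by auto
next
  case (InfP f)
  have "f = case_nat (f 0) (\<lambda>i. f (Suc i))" by (rule ext) (simp split: nat.splits)
  then show ?thesis using assms InfP unfolding boundary_paths_def inf_path_def by auto
qed

lemma bd_shift:
  assumes "p \<in> bd" shows "shift r p \<in> bd"
proof (cases "edge_at p 0")
  case None
  then show ?thesis using assms edge_at_None_shift by metis
next
  case (Some e)
  show ?thesis
  proof (cases p)
    case (FinP v es)
    then obtain es' where es: "es = e # es'" using Some by (cases es) (auto split: if_splits)
    have fp: "fin_path V0 E1 r s v es" and sg: "singular_vertex E1 s (p_rng r (FinP v es))"
      using assms FinP unfolding boundary_paths_def by auto
    have e: "e \<in> E1" using fp es unfolding fin_path_def by auto
    have "fin_path V0 E1 r s (r e) es'"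
      unfolding fin_path_def
    proof (intro conjI allI impI)
      show "r e \<in> V0" using e rE by auto
      show "set es' \<subseteq> E1" using fp es unfolding fin_path_def by auto
      show "s (hd es') = r e" if "es' \<noteq> []"
        using fp es that unfolding fin_path_def by (cases es') (auto dest!: spec[of _ 0])
      show "r (es' ! i) = s (es' ! Suc i)" if "Suc i < length es'" for i
        using fp es that unfolding fin_path_def by (auto dest!: spec[of _ "Suc i"])
    qed
    moreover have "p_rng r (FinP (r e) es') = p_rng r (FinP v es)" using es by auto
    ultimately show ?thesis using FinP es sg unfolding boundary_paths_def by auto
  next
    case (InfP f)
    then show ?thesis using assms unfolding boundary_paths_def inf_path_def by auto
  qed
qed

lemma bd_prepend:
  assumes "\<gamma> \<in> bd" "e \<in> E1" "p_src s \<gamma> = r e"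
  shows "prepend s e \<gamma> \<in> bd"
proof (cases \<gamma>)
  case (FinP v es)
  have fp: "fin_path V0 E1 r s v es" and sg: "singular_vertex E1 s (p_rng r (FinP v es))"
    using assms FinP unfolding boundary_paths_def by auto
  have v: "v = r e" using assms FinP by simp
  have "fin_path V0 E1 r s (s e) (e # es)"
    unfolding fin_path_def
  proof (intro conjI allI impI)
    show "s e \<in> V0" using assms sE by auto
    show "set (e # es) \<subseteq> E1" using fp assms unfolding fin_path_def by auto
    show "s (hd (e # es)) = s e" by simp
    show "r ((e # es) ! i) = s ((e # es) ! Suc i)" if "Suc i < length (e # es)" for i
    proof (cases i)
      case 0
      then show ?thesis using fp v that unfolding fin_path_def by (cases es) auto
    next
      case (Suc j)
      then show ?thesis using fp that unfolding fin_path_def by auto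
    qed
  qed
  moreover have "p_rng r (FinP (s e) (e # es)) = p_rng r (FinP v es)" using v by auto
  ultimately show ?thesis using FinP sg unfolding boundary_paths_def by auto
next
  case (InfP f)
  have "inf_path E1 r s (case_nat e f)"
    using assms InfP unfolding boundary_paths_def inf_path_def
    by (auto split: nat.splits)
  then show ?thesis using InfP unfolding boundary_paths_def by auto
qed

lemma cls_sub: "cls \<alpha> \<subseteq> bd"
  unfolding tail_class_def by auto

lemma cls_self: "\<alpha> \<in> bd \<Longrightarrow> \<alpha> \<in> cls \<alpha>"
  unfolding tail_class_def using tail_equiv_refl by auto

lemma cls_shift: "p \<in> cls \<alpha> \<Longrightarrow> shift r p \<in> cls \<alpha>"
  unfolding tail_class_def using bd_shift tail_equiv_shift tail_equiv_trans by blast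

lemma cls_prepend: "\<gamma> \<in> cls \<alpha> \<Longrightarrow> e \<in> E1 \<Longrightarrow> p_src s \<gamma> = r e \<Longrightarrow> prepend s e \<gamma> \<in> cls \<alpha>"
  unfolding tail_class_def using bd_prepend tail_equiv_shift tail_equiv_trans tail_equiv_sym shift_prepend
  by (metis (no_types, lifting) mem_Collect_eq)

lemma cls_eq: "\<alpha> \<in> bd \<Longrightarrow> \<alpha> \<in> cls \<beta> \<Longrightarrow> cls \<alpha> = cls \<beta>"
  unfolding tail_class_def using tail_equiv_trans tail_equiv_sym by blast

end


definition Se :: "('e \<Rightarrow> 'v) \<Rightarrow> ('e \<Rightarrow> 'v) \<Rightarrow> 'e \<Rightarrow> ('v,'e) gpath set" where
  "Se r s e = {\<beta>. \<exists>\<gamma>. strip r e \<beta> = Some \<gamma> \<and> \<beta> = prepend s e \<gamma> \<and> p_src s \<gamma> = r e}"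

lemma Se_D: assumes "\<beta> \<in> Se r s e"
  shows "edge_at \<beta> 0 = Some e \<and> strip r e \<beta> = Some (shift r \<beta>) \<and> \<beta> = prepend s e (shift r \<beta>) \<and> p_src s (shift r \<beta>) = r e"
proof -
  obtain \<gamma> where g: "strip r e \<beta> = Some \<gamma>" "\<beta> = prepend s e \<gamma>" "p_src s \<gamma> = r e"
    using assms unfolding Se_def by blast
  have "\<gamma> = shift r \<beta> \<and> edge_at \<beta> 0 = Some e" using strip_Some[OF g(1)] .
  then show ?thesis using g by metis
qed
lemma Se_edge: "\<beta> \<in> Se r s e \<Longrightarrow> edge_at \<beta> 0 = Some e"
  using Se_D by metis
lemma Se_shift: "\<beta> \<in> Se r s e \<Longrightarrow> \<beta> = prepend s e (shift r \<beta>) \<and> p_src s (shift r \<beta>) = r e"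
  using Se_D by metis
lemma op_s_alt: "op_s r s e x = (\<lambda>\<beta>. if \<beta> \<in> Se r s e then x (shift r \<beta>) else 0)"
proof (rule ext)
  fix \<beta>
  show "op_s r s e x \<beta> = (if \<beta> \<in> Se r s e then x (shift r \<beta>) else 0)"
  proof (cases "strip r e \<beta>")
    case None
    then show ?thesis unfolding op_s_def Se_def by auto
  next
    case (Some \<gamma>)
    have g: "\<gamma> = shift r \<beta>" by (rule conjunct1[OF strip_Some[OF Some]])
    show ?thesis
    proof (cases "\<beta> = prepend s e \<gamma> \<and> p_src s \<gamma> = r e")
      case True
      then have bS: "\<beta> \<in> Se r s e" using Some unfolding Se_def by blast
      have "op_s r s e x \<beta> = x \<gamma>" using Some True unfolding op_s_def by simp
      then show ?thesis using bS g by simp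
    next
      case False
      then have "\<beta> \<notin> Se r s e" using Some unfolding Se_def by auto
      then show ?thesis using False Some unfolding op_s_def by (simp only: option.case if_False)
    qed
  qed
qed
lemma inj_shift_Se: "inj_on (shift r) (Se r s e)"
  by (metis Se_shift inj_onI)
lemma Q_alt: "(op_s r s e \<circ> op_sstar r s e) x = (\<lambda>\<beta>. if \<beta> \<in> Se r s e then x \<beta> else 0)"
proof (rule ext)
  fix \<beta>
  show "(op_s r s e \<circ> op_sstar r s e) x \<beta> = (if \<beta> \<in> Se r s e then x \<beta> else 0)"
  proof (cases "\<beta> \<in> Se r s e")
    case True
    have h1: "prepend s e (shift r \<beta>) = \<beta>" using Se_D[OF True] by metis
    have h2: "p_src s (shift r \<beta>) = r e" using Se_D[OF True] by metis
    show ?thesis using True by (simp add: op_s_alt op_sstar_def h1 h2)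
  next
    case False
    then show ?thesis unfolding comp_def op_s_alt by simp
  qed
qed

lemma Se_delta: "p \<in> Se r s e \<Longrightarrow> op_s r s e (delta (shift r p)) = delta p"
proof (rule ext)
  fix \<beta> assume pS: "p \<in> Se r s e"
  show "op_s r s e (delta (shift r p)) \<beta> = delta p \<beta>"
  proof (cases "\<beta> \<in> Se r s e")
    case True
    then have "shift r \<beta> = shift r p \<longleftrightarrow> \<beta> = p" using inj_shift_Se[of r s e] pS inj_onD by metis
    then show ?thesis using True unfolding op_s_alt delta_def by simp
  next
    case False
    then show ?thesis using pS unfolding op_s_alt delta_def by auto
  qed
qed

lemma op_sstar_alt: "op_sstar r s e x = (\<lambda>\<gamma>. if \<gamma> \<in> {\<gamma>. p_src s \<gamma> = r e} then x (prepend s e \<gamma>) else 0)"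
  unfolding op_sstar_def by auto

lemma inj_prepend: "inj_on (prepend s e) {\<gamma>. p_src s \<gamma> = r e}"
proof (rule inj_onI)
  fix x y assume x: "x \<in> {\<gamma>. p_src s \<gamma> = r e}" and y: "y \<in> {\<gamma>. p_src s \<gamma> = r e}"
    and xy: "prepend s e x = prepend s e y"
  have "shift r (prepend s e x) = shift r (prepend s e y)" using xy by (rule arg_cong)
  then show "x = y" using shift_prepend[of s x r e] shift_prepend[of s y r e] x y by simp
qed

lemma op_p_alt: "op_p s v x = (\<lambda>\<beta>. if \<beta> \<in> {\<beta>. p_src s \<beta> = v} then x (id \<beta>) else 0)"
  unfolding op_p_def by auto

context G begin

lemma Se_bd: assumes "\<beta> \<in> bd" "edge_at \<beta> 0 = Some e" shows "\<beta> \<in> Se r s e"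
proof -
  have h: "strip r e \<beta> = Some (shift r \<beta>)" "\<beta> = prepend s e (shift r \<beta>)" "p_src s (shift r \<beta>) = r e"
    using bd_edge0[OF assms] by (meson)+
  show ?thesis unfolding Se_def by (rule CollectI, rule exI[of _ "shift r \<beta>"], intro conjI h)
qed

lemma delta_eigen:
  fixes T :: "(('v,'e) gpath \<Rightarrow> 'a::field) \<Rightarrow> (('v,'e) gpath \<Rightarrow> 'a)"
  assumes \<alpha>: "\<alpha> \<in> bd"
  and D: "\<And>p. p \<in> cls \<alpha> \<Longrightarrow> delta p \<in> D"
  and T0: "T (\<lambda>p. 0) = (\<lambda>p. 0)"
  and supp: "\<And>x q. x \<in> D \<Longrightarrow> q \<notin> bd \<Longrightarrow> T x q = 0"
  and cp: "\<And>v x. v \<in> V0 \<Longrightarrow> x \<in> D \<Longrightarrow> T (op_p s v x) = op_p s v (T x)"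
  and cs: "\<And>e x. e \<in> E1 \<Longrightarrow> x \<in> D \<Longrightarrow> T (op_s r s e x) = op_s r s e (T x)"
  and cq: "\<And>e x. e \<in> E1 \<Longrightarrow> x \<in> D \<Longrightarrow> T ((op_s r s e \<circ> op_sstar r s e) x) = (op_s r s e \<circ> op_sstar r s e) (T x)"
  shows "\<exists>z. \<forall>p \<in> cls \<alpha>. T (delta p) = (\<lambda>q. z * delta p q)"
proof -
  have P2: "T (delta p) q = 0" if p: "p \<in> cls \<alpha>" and q: "q \<in> bd" and ne: "p_src s p \<noteq> p_src s q" for p q
  proof -
    define v where "v = p_src s p"
    have v: "v \<in> V0" using bd_src p cls_sub v_def by blast
    have "op_p s v (delta p) = delta p" unfolding op_p_def delta_def v_def by auto
    then have "T (delta p) q = op_p s v (T (delta p)) q" using cp[OF v D[OF p]] by metis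
    then show ?thesis using ne unfolding op_p_def v_def by simp
  qed
  have P1: "\<forall>p q. p \<in> cls \<alpha> \<longrightarrow> q \<in> bd \<longrightarrow> (\<forall>j<i. edge_at p j = edge_at q j) \<longrightarrow> edge_at p i \<noteq> edge_at q i
     \<longrightarrow> T (delta p) q = 0" for i
  proof (induction i)
    case 0
    show ?case
    proof (intro allI impI)
      fix p q assume p: "p \<in> cls \<alpha>" and q: "q \<in> bd" and ne: "edge_at p 0 \<noteq> edge_at q 0"
      have pb: "p \<in> bd" using p cls_sub by blast
      show "T (delta p) q = 0"
      proof (cases "edge_at p 0")
        case (Some e)
        have e: "e \<in> E1" using bd_edge0[OF pb Some] by blast
        have "(op_s r s e \<circ> op_sstar r s e) (delta p) = delta p"
          unfolding Q_alt using Se_bd[OF pb Some] by (auto simp: delta_def)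
        then have "T (delta p) q = (op_s r s e \<circ> op_sstar r s e) (T (delta p)) q"
          using cq[OF e D[OF p]] by metis
        also have "\<dots> = 0" unfolding Q_alt using Se_edge ne Some by fastforce
        finally show ?thesis .
      next
        case None
        then obtain e where e0: "edge_at q 0 = Some e" using ne None by (cases "edge_at q 0") auto
        have e: "e \<in> E1" using bd_edge0[OF q e0] by blast
        have "(op_s r s e \<circ> op_sstar r s e) (delta p :: (('v,'e) gpath \<Rightarrow> 'a)) = (\<lambda>p. 0)"
          unfolding Q_alt using Se_edge None by (fastforce simp: delta_def)
        then have "T (\<lambda>p. 0) = (op_s r s e \<circ> op_sstar r s e) (T (delta p))"
          using cq[OF e D[OF p]] by metis
        then have "(op_s r s e \<circ> op_sstar r s e) (T (delta p)) q = 0" using T0 by metis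
        then show ?thesis unfolding Q_alt using Se_bd[OF q e0] by simp
      qed
    qed
  next
    case (Suc i)
    show ?case
    proof (intro allI impI)
      fix p q assume p: "p \<in> cls \<alpha>" and q: "q \<in> bd" and eq: "\<forall>j<Suc i. edge_at p j = edge_at q j"
        and ne: "edge_at p (Suc i) \<noteq> edge_at q (Suc i)"
      have pb: "p \<in> bd" using p cls_sub by blast
      have e00: "edge_at p 0 = edge_at q 0" using eq by auto
      then obtain e where ep: "edge_at p 0 = Some e"
        using ne edge_at_None by (metis option.exhaust)
      then have eq0: "edge_at q 0 = Some e" using e00 by simp
      have e: "e \<in> E1" using bd_edge0[OF pb ep] by blast
      have pS: "p \<in> Se r s e" using Se_bd[OF pb ep] .
      have qS: "q \<in> Se r s e" using Se_bd[OF q eq0] .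
      have dp: "op_s r s e (delta (shift r p)) = (delta p :: (('v,'e) gpath \<Rightarrow> 'a))" using Se_delta[OF pS] .
      have "T (delta p) q = op_s r s e (T (delta (shift r p))) q"
        using cs[OF e D[OF cls_shift[OF p]]] dp by simp
      also have "\<dots> = T (delta (shift r p)) (shift r q)" unfolding op_s_alt using qS by simp
      also have "\<dots> = 0"
        using Suc.IH cls_shift[OF p] bd_shift[OF q] eq ne by (simp add: edge_at_shift)
      finally show "T (delta p) q = 0" .
    qed
  qed
  have P3: "T (delta p) q = 0" if p: "p \<in> cls \<alpha>" and ne: "q \<noteq> p" for p q
  proof (cases "q \<in> bd")
    case False
    then show ?thesis using supp D[OF p] by blast
  next
    case q: True
    have "p_src s p \<noteq> p_src s q \<or> (\<exists>i. edge_at p i \<noteq> edge_at q i)" using neq_edge_at ne by metis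
    then show ?thesis
    proof
      assume "p_src s p \<noteq> p_src s q" then show ?thesis using P2 p q by blast
    next
      assume "\<exists>i. edge_at p i \<noteq> edge_at q i"
      then obtain i where "edge_at p i \<noteq> edge_at q i" "\<forall>j<i. \<not> edge_at p j \<noteq> edge_at q j"
        using exists_least_iff[of "\<lambda>i. edge_at p i \<noteq> edge_at q i"] by blast
      then show ?thesis using P1[of i] p q by blast
    qed
  qed
  define c where "c p = T (delta p) p" for p
  have P4: "T (delta p) = (\<lambda>q. c p * delta p q)" if p: "p \<in> cls \<alpha>" for p
    using P3[OF p] unfolding c_def delta_def by (auto simp: fun_eq_iff)
  have P5: "c (shift r p) = c p" if p: "p \<in> cls \<alpha>" for p
  proof (cases "edge_at p 0")
    case None
    then show ?thesis using edge_at_None_shift by metis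
  next
    case (Some e)
    have pb: "p \<in> bd" using p cls_sub by blast
    have e: "e \<in> E1" using bd_edge0[OF pb Some] by blast
    have pS: "p \<in> Se r s e" using Se_bd[OF pb Some] .
    have dp: "op_s r s e (delta (shift r p)) = (delta p :: (('v,'e) gpath \<Rightarrow> 'a))" using Se_delta[OF pS] .
    have "c p = op_s r s e (T (delta (shift r p))) p"
      unfolding c_def using cs[OF e D[OF cls_shift[OF p]]] dp by simp
    also have "\<dots> = c (shift r p)" unfolding op_s_alt c_def using pS by simp
    finally show ?thesis by simp
  qed
  have P6: "c ((shift r ^^ n) p) = c p \<and> (shift r ^^ n) p \<in> cls \<alpha>" if p: "p \<in> cls \<alpha>" for p n
  proof (induction n)
    case 0 then show ?case using p by simp
  next
    case (Suc n) then show ?case using P5 cls_shift by simp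
  qed
  have P7: "c p = c \<alpha>" if p: "p \<in> cls \<alpha>" for p
  proof -
    have "tail_equiv r \<alpha> p" using p unfolding tail_class_def by blast
    then obtain a b where ab: "(shift r ^^ a) \<alpha> = (shift r ^^ b) p" unfolding tail_equiv_def by blast
    have "c \<alpha> = c ((shift r ^^ a) \<alpha>)" using P6 cls_self[OF \<alpha>] by metis
    also have "\<dots> = c p" using ab P6 p by metis
    finally show ?thesis by simp
  qed
  show ?thesis using P4 P7 by metis
qed

end


abbreviation sqs :: "('p \<Rightarrow> complex) \<Rightarrow> bool" where
  "sqs x \<equiv> (\<lambda>p. (cmod (x p))\<^sup>2) summable_on UNIV"

lemma real_summable_cmp:
  fixes f g :: "'p \<Rightarrow> real"
  assumes "g summable_on A" "\<And>x. x \<in> A \<Longrightarrow> 0 \<le> f x \<and> f x \<le> g x"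
  shows "f summable_on A"
proof -
  have "(\<lambda>x. norm (g x)) summable_on A" using assms(1) summable_on_iff_abs_summable_on_real by blast
  then have "(\<lambda>x. norm (f x)) summable_on A"
    by (rule Infinite_Sum.abs_summable_on_comparison_test) (use assms(2) in force)
  then show ?thesis using summable_on_iff_abs_summable_on_real by blast
qed

lemma cmod_add_sq: "(cmod (a + b))\<^sup>2 \<le> 2 * (cmod a)\<^sup>2 + 2 * (cmod b)\<^sup>2"
proof -
  have "cmod (a + b) \<le> cmod a + cmod b" by (rule norm_triangle_ineq)
  then have "(cmod (a + b))\<^sup>2 \<le> (cmod a + cmod b)\<^sup>2" by (simp add: power_mono)
  also have "\<dots> \<le> 2 * (cmod a)\<^sup>2 + 2 * (cmod b)\<^sup>2"
    by (smt (verit) sum_squares_bound power2_sum)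
  finally show ?thesis .
qed

lemma sqs_add: "sqs x \<Longrightarrow> sqs y \<Longrightarrow> sqs (\<lambda>p. x p + y p)"
  by (rule real_summable_cmp[where g = "\<lambda>p. 2 * (cmod (x p))\<^sup>2 + 2 * (cmod (y p))\<^sup>2"])
     (auto intro!: summable_on_add summable_on_cmult_right cmod_add_sq)

lemma sqs_mult: "sqs x \<Longrightarrow> sqs (\<lambda>p. c * x p)"
  by (simp add: norm_mult power_mult_distrib summable_on_cmult_right)

lemma sqs_diff: "sqs x \<Longrightarrow> sqs y \<Longrightarrow> sqs (\<lambda>p. x p - y p)"
  using sqs_add[of x "\<lambda>p. (-1) * y p"] sqs_mult[of y "-1"] by simp

lemma sqs_restrict: "sqs x \<Longrightarrow> sqs (\<lambda>p. if p \<in> A then x p else 0)"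
  by (rule real_summable_cmp[where g = "\<lambda>p. (cmod (x p))\<^sup>2"]) auto

lemma reindex_sqs:
  assumes inj: "inj_on g S" and x: "sqs x"
  shows "sqs (\<lambda>\<beta>. if \<beta> \<in> S then x (g \<beta>) else 0)"
    and "infsum (\<lambda>\<beta>. (cmod (if \<beta> \<in> S then x (g \<beta>) else 0))\<^sup>2) UNIV \<le> infsum (\<lambda>p. (cmod (x p))\<^sup>2) UNIV"
proof -
  define f where "f = (\<lambda>p. (cmod (x p))\<^sup>2)"
  have fU: "f summable_on UNIV" using x unfolding f_def .
  have f1: "f summable_on (g ` S)" using summable_on_subset_banach x unfolding f_def by blast
  then have f2: "(f \<circ> g) summable_on S" using summable_on_reindex[OF inj] by blast
  have cong: "(f \<circ> g) summable_on S \<longleftrightarrow> (\<lambda>\<beta>. (cmod (if \<beta> \<in> S then x (g \<beta>) else 0))\<^sup>2) summable_on UNIV"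
    by (rule summable_on_cong_neutral) (auto simp: f_def)
  then show "sqs (\<lambda>\<beta>. if \<beta> \<in> S then x (g \<beta>) else 0)" using f2 by blast
  have "infsum (\<lambda>\<beta>. (cmod (if \<beta> \<in> S then x (g \<beta>) else 0))\<^sup>2) UNIV = infsum (f \<circ> g) S"
    by (rule infsum_cong_neutral) (auto simp: f_def)
  also have "\<dots> = infsum f (g ` S)" by (rule infsum_reindex[OF inj, symmetric])
  also have "\<dots> \<le> infsum f UNIV"
    by (rule infsum_mono_neutral) (use f1 fU in \<open>auto simp: f_def\<close>)
  finally show "infsum (\<lambda>\<beta>. (cmod (if \<beta> \<in> S then x (g \<beta>) else 0))\<^sup>2) UNIV \<le> infsum (\<lambda>p. (cmod (x p))\<^sup>2) UNIV"
    unfolding f_def .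
qed

lemma gen_lin:
  assumes "a \<in> gen_alg V0 E1 r s"
  shows "a (\<lambda>p. c * x p) = (\<lambda>p. c * a x p) \<and> a (\<lambda>p. x p + y p) = (\<lambda>p. a x p + a y p)"
  using assms
proof (induction arbitrary: x y c)
  case (gen_p v) then show ?case unfolding op_p_def by (auto simp: fun_eq_iff)
next
  case (gen_s e) then show ?case unfolding op_s_alt by (auto simp: fun_eq_iff)
next
  case (gen_sstar e) then show ?case unfolding op_sstar_def by (auto simp: fun_eq_iff)
next
  case (gen_add a b) then show ?case by (auto simp: fun_eq_iff algebra_simps)
next
  case (gen_smult a d) then show ?case by (auto simp: fun_eq_iff algebra_simps)
next
  case (gen_comp a b)
  show ?case using gen_comp.IH(1)[of c "b x" "b y"] gen_comp.IH(2)[of c x y] by simp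
qed

lemma gen_zero:
  assumes "a \<in> gen_alg V0 E1 r s" shows "a (\<lambda>p. 0) = (\<lambda>p. 0)"
  using gen_lin[OF assms, of 0 "\<lambda>p. 0"] by simp

lemma reindex_fin:
  assumes "inj_on g S" "finite {p. x p \<noteq> 0}"
  shows "finite {\<beta>. (if \<beta> \<in> S then x (g \<beta>) else 0) \<noteq> 0}"
proof -
  have "{\<beta>. (if \<beta> \<in> S then x (g \<beta>) else 0) \<noteq> 0} \<subseteq> g -` {p. x p \<noteq> 0} \<inter> S" by auto
  moreover have "finite (g -` {p. x p \<noteq> 0} \<inter> S)" using finite_vimage_IntI assms by blast
  ultimately show ?thesis using finite_subset by blast
qed

lemma gen_fin:
  assumes "a \<in> gen_alg V0 E1 r s" "finite {p. x p \<noteq> 0}"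
  shows "finite {p. a x p \<noteq> 0}"
  using assms
proof (induction arbitrary: x)
  case (gen_p v) then show ?case unfolding op_p_alt by (intro reindex_fin[OF inj_on_id] gen_p.prems)
next
  case (gen_s e) then show ?case unfolding op_s_alt by (intro reindex_fin[OF inj_shift_Se] gen_s.prems)
next
  case (gen_sstar e) then show ?case unfolding op_sstar_alt by (intro reindex_fin[OF inj_prepend] gen_sstar.prems)
next
  case (gen_add a b)
  have "{p. a x p + b x p \<noteq> 0} \<subseteq> {p. a x p \<noteq> 0} \<union> {p. b x p \<noteq> 0}" by auto
  then show ?case using gen_add finite_subset by (metis (no_types, lifting) finite_Un)
next
  case (gen_smult a c)
  have "{p. c * a x p \<noteq> 0} \<subseteq> {p. a x p \<noteq> 0}" by auto
  then show ?case using gen_smult finite_subset by blast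
next
  case (gen_comp a b) then show ?case by simp
qed

lemma gen_sqs:
  assumes "a \<in> gen_alg V0 E1 r s" "sqs x"
  shows "sqs (a x)"
  using assms
proof (induction arbitrary: x)
  case (gen_p v) then show ?case unfolding op_p_alt by (intro reindex_sqs[OF inj_on_id] gen_p.prems)
next
  case (gen_s e) then show ?case unfolding op_s_alt by (intro reindex_sqs[OF inj_shift_Se] gen_s.prems)
next
  case (gen_sstar e) then show ?case unfolding op_sstar_alt by (intro reindex_sqs[OF inj_prepend] gen_sstar.prems)
next
  case (gen_add a b) then show ?case by (simp add: sqs_add)
next
  case (gen_smult a c) then show ?case by (simp add: sqs_mult)
next
  case (gen_comp a b) then show ?case by simp
qed

context G begin

definition closedset :: "('v,'e) gpath set \<Rightarrow> bool" where
  "closedset C \<longleftrightarrow> (\<forall>\<gamma> e. \<gamma> \<in> C \<longrightarrow> e \<in> E1 \<longrightarrow> p_src s \<gamma> = r e \<longrightarrow> prepend s e \<gamma> \<in> C)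
      \<and> (\<forall>p\<in>C. shift r p \<in> C)"

lemma closed_bd: "closedset bd"
  unfolding closedset_def using bd_prepend bd_shift by blast

lemma closed_cls: "closedset (cls \<alpha>)"
  unfolding closedset_def using cls_prepend cls_shift by blast

lemma gen_supp:
  assumes "a \<in> gen_alg V0 E1 r s" "closedset C" "{p. x p \<noteq> 0} \<subseteq> C"
  shows "{p. a x p \<noteq> 0} \<subseteq> C"
  using assms(1,3)
proof (induction arbitrary: x)
  case (gen_p v) then show ?case unfolding op_p_def by auto
next
  case (gen_s e)
  show ?case
  proof
    fix \<beta> assume "\<beta> \<in> {p. op_s r s e x p \<noteq> 0}"
    then have b: "\<beta> \<in> Se r s e" "x (shift r \<beta>) \<noteq> 0" unfolding op_s_alt by (simp_all split: if_splits)
    then have "shift r \<beta> \<in> C" using gen_s by blast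
    moreover have "e \<in> E1" using gen_s by blast
    moreover have "p_src s (shift r \<beta>) = r e" using Se_D[OF b(1)] by blast
    ultimately have "prepend s e (shift r \<beta>) \<in> C"
      using assms(2) unfolding closedset_def by blast
    moreover have "prepend s e (shift r \<beta>) = \<beta>" using Se_D[OF b(1)] by metis
    ultimately show "\<beta> \<in> C" by simp
  qed
next
  case (gen_sstar e)
  show ?case
  proof
    fix \<gamma> assume "\<gamma> \<in> {p. op_sstar r s e x p \<noteq> 0}"
    then have b: "p_src s \<gamma> = r e" "x (prepend s e \<gamma>) \<noteq> 0" unfolding op_sstar_def by (auto split: if_splits)
    then have "prepend s e \<gamma> \<in> C" using gen_sstar by blast
    then have "shift r (prepend s e \<gamma>) \<in> C" using assms(2) unfolding closedset_def by blast
    then show "\<gamma> \<in> C" using shift_prepend[of s \<gamma> r e, OF b(1)] by simp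
  qed
next
  case (gen_add a b)
  have "{p. a x p + b x p \<noteq> 0} \<subseteq> {p. a x p \<noteq> 0} \<union> {p. b x p \<noteq> 0}" by auto
  then show ?case using gen_add.IH gen_add.prems by blast
next
  case (gen_smult a c)
  have "{p. c * a x p \<noteq> 0} \<subseteq> {p. a x p \<noteq> 0}" by auto
  then show ?case using gen_smult.IH gen_smult.prems by blast
next
  case (gen_comp a b) then show ?case by simp
qed

end


lemma lin_zero:
  fixes T :: "('p \<Rightarrow> 'a::field) \<Rightarrow> ('p \<Rightarrow> 'a)"
  assumes "lin_map_on A B T" "(\<lambda>p. 0) \<in> A"
  shows "T (\<lambda>p. 0) = (\<lambda>p. 0)"
proof -
  have h: "\<forall>c. \<forall>x\<in>A. T (\<lambda>p. c * x p) = (\<lambda>p. c * T x p)"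
    using assms unfolding lin_map_on_def by blast
  have "T (\<lambda>p. 0 * (0::'a)) = (\<lambda>p. 0 * T (\<lambda>p. 0) p)"
    using h[THEN spec[of _ 0], rule_format, OF assms(2)] by simp
  then show ?thesis by simp
qed

lemma fin_lin:
  fixes T :: "(('v,'e) gpath \<Rightarrow> 'a::field) \<Rightarrow> (('v,'e) gpath \<Rightarrow> 'a)"
  assumes lin: "lin_map_on A B T"
    and inA: "\<And>x. finite {p. x p \<noteq> 0} \<Longrightarrow> {p. x p \<noteq> 0} \<subseteq> C \<Longrightarrow> x \<in> A"
    and del: "\<And>p. p \<in> C \<Longrightarrow> T (delta p) = (\<lambda>q. z * delta p q)"
    and T0: "T (\<lambda>p. 0) = (\<lambda>p. 0)"
    and fx: "finite {p. x p \<noteq> 0}" and sx: "{p. x p \<noteq> 0} \<subseteq> C"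
  shows "T x = (\<lambda>p. z * x p)"
proof -
  have "\<forall>x. {p. x p \<noteq> 0} \<subseteq> F \<longrightarrow> F \<subseteq> C \<longrightarrow> T x = (\<lambda>p. z * x p)" if "finite F" for F
    using that
  proof (induction F rule: finite_induct)
    case empty
    show ?case
    proof (intro allI impI)
      fix x :: "('v,'e) gpath \<Rightarrow> 'a" assume "{p. x p \<noteq> 0} \<subseteq> {}"
      then have "x = (\<lambda>p. 0)" by auto
      then show "T x = (\<lambda>p. z * x p)" using T0 by simp
    qed
  next
    case (insert a F)
    show ?case
    proof (intro allI impI)
      fix x :: "('v,'e) gpath \<Rightarrow> 'a" assume sx: "{p. x p \<noteq> 0} \<subseteq> insert a F" and FC: "insert a F \<subseteq> C"
      define y where "y = (\<lambda>p. if p = a then 0 else x p)"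
      define d where "d = (\<lambda>p. x a * delta a p)"
      have sy: "{p. y p \<noteq> 0} \<subseteq> F" using sx unfolding y_def by auto
      have Ty: "T y = (\<lambda>p. z * y p)" using insert.IH sy FC by blast
      have yA: "y \<in> A"
        by (rule inA) (use sy FC insert.hyps(1) finite_subset in auto)
      have dA': "delta a \<in> A"
        by (rule inA) (use FC in \<open>auto simp: delta_def\<close>)
      have Td: "T d = (\<lambda>p. x a * (z * delta a p))"
        using lin dA' del[of a] FC unfolding lin_map_on_def d_def by auto
      have dA: "d \<in> A" unfolding d_def using lin dA' inA
        by (intro inA) (use FC in \<open>auto simp: delta_def\<close>)
      have x: "x = (\<lambda>p. y p + d p)" unfolding y_def d_def delta_def by auto
      have "T x = (\<lambda>p. T y p + T d p)" using lin yA dA x unfolding lin_map_on_def by metis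
      also have "\<dots> = (\<lambda>p. z * x p)" unfolding Ty Td x by (auto simp: algebra_simps y_def d_def delta_def)
      finally show "T x = (\<lambda>p. z * x p)" .
    qed
  qed
  then show ?thesis using fx sx by blast
qed

context G begin

abbreviation span where "span \<equiv> span_space V0 E1 r s"

lemma span_I: "finite {p. x p \<noteq> 0} \<Longrightarrow> {p. x p \<noteq> 0} \<subseteq> cls \<alpha> \<Longrightarrow> x \<in> span \<alpha>"
  unfolding span_space_def by blast

lemma delta_span: "p \<in> cls \<alpha> \<Longrightarrow> delta p \<in> span \<alpha>"
  by (rule span_I) (auto simp: delta_def)

lemma zero_span: "(\<lambda>p. 0) \<in> span \<alpha>"
  by (rule span_I) auto

lemma span_add: "(x :: ('v,'e) gpath \<Rightarrow> 'a::field) \<in> span \<alpha> \<Longrightarrow> y \<in> span \<alpha> \<Longrightarrow> (\<lambda>p. x p + y p) \<in> span \<alpha>"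
proof -
  assume x: "x \<in> span \<alpha>" and y: "y \<in> span \<alpha>"
  have sub: "{p. x p + y p \<noteq> 0} \<subseteq> {p. x p \<noteq> 0} \<union> {p. y p \<noteq> 0}" by auto
  show ?thesis
    by (rule span_I) (use x y sub finite_subset in \<open>auto simp: span_space_def\<close>)
qed

lemma span_mult: "(x :: ('v,'e) gpath \<Rightarrow> 'a::field) \<in> span \<alpha> \<Longrightarrow> (\<lambda>p. c * x p) \<in> span \<alpha>"
proof -
  assume x: "x \<in> span \<alpha>"
  have sub: "{p. c * x p \<noteq> 0} \<subseteq> {p. x p \<noteq> 0}" by auto
  show ?thesis
    by (rule span_I) (use x sub finite_subset in \<open>auto simp: span_space_def\<close>)
qed

lemma span_gen: "a \<in> gen_alg V0 E1 r s \<Longrightarrow> x \<in> span \<alpha> \<Longrightarrow> a x \<in> span \<alpha>"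
  unfolding span_space_def using gen_fin gen_supp[OF _ closed_cls] by blast

lemma Q_gen: "e \<in> E1 \<Longrightarrow> op_s r s e \<circ> op_sstar r s e \<in> gen_alg V0 E1 r s"
  by (intro gen_comp gen_s gen_sstar)

lemma partA1:
  fixes T :: "(('v,'e) gpath \<Rightarrow> 'k::field) \<Rightarrow> (('v,'e) gpath \<Rightarrow> 'k)"
  assumes \<alpha>: "\<alpha> \<in> bd" and \<beta>: "\<beta> \<in> bd"
    and lin: "lin_map_on (span \<alpha>) (span \<beta>) T"
    and nz: "\<exists>x\<in>span \<alpha>. T x \<noteq> (\<lambda>p. 0)"
    and com: "\<forall>a\<in>gen_alg V0 E1 r s. \<forall>x\<in>span \<alpha>. T (a x) = a (T x)"
  shows "cls \<alpha> = cls \<beta> \<and> (\<exists>z. \<forall>x\<in>span \<alpha>. T x = (\<lambda>p. z * x p))"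
proof -
  have T0: "T (\<lambda>p. 0) = (\<lambda>p. 0)" using lin_zero[OF lin zero_span] .
  have supp: "T x q = 0" if "x \<in> span \<alpha>" "q \<notin> bd" for x q
  proof -
    have "T x \<in> span \<beta>" using lin that unfolding lin_map_on_def by blast
    then show ?thesis using that cls_sub unfolding span_space_def by blast
  qed
  obtain z where z: "\<forall>p \<in> cls \<alpha>. T (delta p) = (\<lambda>q. z * delta p q)"
  proof -
    have "\<exists>z. \<forall>p \<in> cls \<alpha>. T (delta p) = (\<lambda>q. z * delta p q)"
    proof (rule delta_eigen[OF \<alpha>, of "span \<alpha>" T])
      show "delta p \<in> span \<alpha>" if "p \<in> cls \<alpha>" for p using delta_span that .
      show "T (\<lambda>p. 0) = (\<lambda>p. 0)" using T0 .
      show "T x q = 0" if "x \<in> span \<alpha>" "q \<notin> bd" for x q using supp that .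
      show "T (op_p s v x) = op_p s v (T x)" if "v \<in> V0" "x \<in> span \<alpha>" for v x
        using com[rule_format, OF gen_p[OF that(1)] that(2)] .
      show "T (op_s r s e x) = op_s r s e (T x)" if "e \<in> E1" "x \<in> span \<alpha>" for e x
        using com[rule_format, OF gen_s[OF that(1)] that(2)] .
      show "T ((op_s r s e \<circ> op_sstar r s e) x) = (op_s r s e \<circ> op_sstar r s e) (T x)"
        if "e \<in> E1" "x \<in> span \<alpha>" for e x
        using com[rule_format, OF Q_gen[OF that(1)] that(2)] .
    qed
    then show ?thesis using that by blast
  qed
  have Tz: "T x = (\<lambda>p. z * x p)" if "x \<in> span \<alpha>" for x
    by (rule fin_lin[OF lin span_I _ T0]) (use z that in \<open>auto simp: span_space_def\<close>)
  have "z \<noteq> 0" using nz Tz by auto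
  have "T (delta \<alpha>) \<in> span \<beta>" using lin delta_span cls_self[OF \<alpha>] unfolding lin_map_on_def by blast
  moreover have "T (delta \<alpha>) \<alpha> \<noteq> 0" using z cls_self[OF \<alpha>] \<open>z \<noteq> 0\<close> by (simp add: delta_def)
  ultimately have "\<alpha> \<in> cls \<beta>" unfolding span_space_def by blast
  then have "cls \<alpha> = cls \<beta>" using cls_eq \<alpha> by blast
  then show ?thesis using Tz by blast
qed

end


context G begin

lemma scal_Hom:
  "(\<lambda>x\<in>span \<alpha>. (\<lambda>p. (z::'k::field) * x p)) \<in> alg_Hom V0 E1 r s \<alpha> \<alpha>"
proof -
  let ?T = "(\<lambda>x\<in>span \<alpha>. (\<lambda>p. z * x p))"
  have "lin_map_on (span \<alpha>) (span \<alpha>) ?T"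
    unfolding lin_map_on_def
  proof (intro conjI ballI allI)
    show "?T x \<in> span \<alpha>" if "x \<in> span \<alpha>" for x using that span_mult by simp
    show "?T (\<lambda>p. x p + y p) = (\<lambda>p. ?T x p + ?T y p)" if "x \<in> span \<alpha>" "y \<in> span \<alpha>" for x y
      using that span_add[OF that] by (simp add: algebra_simps)
    show "?T (\<lambda>p. c * x p) = (\<lambda>p. c * ?T x p)" if "x \<in> span \<alpha>" for c x
      using that span_mult[OF that, of c] by (simp add: algebra_simps)
  qed
  moreover have "?T (a x) = a (?T x)" if "a \<in> gen_alg V0 E1 r s" "x \<in> span \<alpha>" for a x
    using that span_gen[OF that] gen_lin[OF that(1)] by simp
  ultimately show ?thesis unfolding alg_Hom_def by auto
qed

lemma zero_Hom:
  "(\<lambda>x\<in>span \<alpha>. (\<lambda>p. 0 :: 'k::field)) \<in> alg_Hom V0 E1 r s \<alpha> \<beta>"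
proof -
  let ?T = "(\<lambda>x\<in>(span \<alpha> :: (('v,'e) gpath \<Rightarrow> 'k) set). (\<lambda>p. 0 :: 'k))"
  have "lin_map_on (span \<alpha>) (span \<beta>) ?T"
    unfolding lin_map_on_def
  proof (intro conjI ballI allI)
    show "?T x \<in> span \<beta>" if "x \<in> span \<alpha>" for x using that zero_span by simp
    show "?T (\<lambda>p. x p + y p) = (\<lambda>p. ?T x p + ?T y p)" if "x \<in> span \<alpha>" "y \<in> span \<alpha>" for x y
      using that span_add[OF that] by simp
    show "?T (\<lambda>p. c * x p) = (\<lambda>p. c * ?T x p)" if "x \<in> span \<alpha>" for c x
      using that span_mult[OF that, of c] by simp
  qed
  moreover have "?T (a x) = a (?T x)" if "a \<in> gen_alg V0 E1 r s" "x \<in> span \<alpha>" for a x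
    using that span_gen[OF that] gen_zero[OF that(1)] by simp
  ultimately show ?thesis unfolding alg_Hom_def by auto
qed

lemma Hom_nz:
  fixes T :: "(('v,'e) gpath \<Rightarrow> 'k::field) \<Rightarrow> (('v,'e) gpath \<Rightarrow> 'k)"
  assumes "T \<in> alg_Hom V0 E1 r s \<alpha> \<beta>" "\<alpha> \<in> bd" "\<beta> \<in> bd"
  shows "(\<exists>x\<in>span \<alpha>. T x \<noteq> (\<lambda>p. 0)) \<longrightarrow> cls \<alpha> = cls \<beta> \<and> (\<exists>z. T = (\<lambda>x\<in>span \<alpha>. (\<lambda>p. z * x p)))"
proof
  assume nz: "\<exists>x\<in>span \<alpha>. T x \<noteq> (\<lambda>p. 0)"
  have lin: "lin_map_on (span \<alpha>) (span \<beta>) T"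
    and com: "\<forall>a\<in>gen_alg V0 E1 r s. \<forall>x\<in>span \<alpha>. T (a x) = a (T x)"
    and ext: "T \<in> extensional (span \<alpha>)" using assms(1) unfolding alg_Hom_def by auto
  obtain z where "cls \<alpha> = cls \<beta>" "\<forall>x\<in>span \<alpha>. T x = (\<lambda>p. z * x p)"
    using partA1[OF assms(2,3) lin nz com] by blast
  moreover have "T = (\<lambda>x\<in>span \<alpha>. (\<lambda>p. z * x p))"
    using calculation(2) ext by (auto simp: fun_eq_iff extensional_def)
  ultimately show "cls \<alpha> = cls \<beta> \<and> (\<exists>z. T = (\<lambda>x\<in>span \<alpha>. (\<lambda>p. z * x p)))" by blast
qed

lemma Hom_z:
  fixes T :: "(('v,'e) gpath \<Rightarrow> 'k::field) \<Rightarrow> (('v,'e) gpath \<Rightarrow> 'k)"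
  assumes "T \<in> alg_Hom V0 E1 r s \<alpha> \<beta>" "\<not> (\<exists>x\<in>span \<alpha>. T x \<noteq> (\<lambda>p. 0))"
  shows "T = (\<lambda>x\<in>span \<alpha>. (\<lambda>p. 0))"
  using assms unfolding alg_Hom_def by (auto simp: fun_eq_iff extensional_def)

lemma partA2:
  assumes \<alpha>: "\<alpha> \<in> bd"
  shows "bij_betw (\<lambda>z::'k::field. \<lambda>x\<in>span \<alpha>. (\<lambda>p. z * x p)) UNIV (alg_Hom V0 E1 r s \<alpha> \<alpha>)"
  unfolding bij_betw_def
proof (intro conjI)
  show "inj_on (\<lambda>z::'k. \<lambda>x\<in>span \<alpha>. (\<lambda>p. z * x p)) UNIV"
  proof (rule inj_onI)
    fix z z' :: 'k
    assume "(\<lambda>x\<in>span \<alpha>. (\<lambda>p. z * x p)) = (\<lambda>x\<in>span \<alpha>. (\<lambda>p. z' * x p))"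
    then have "(\<lambda>x\<in>span \<alpha>. (\<lambda>p. z * x p)) (delta \<alpha>) \<alpha> = (\<lambda>x\<in>span \<alpha>. (\<lambda>p. z' * x p)) (delta \<alpha>) \<alpha>"
      by simp
    moreover have "(delta \<alpha> :: ('v,'e) gpath \<Rightarrow> 'k) \<in> span \<alpha>" using delta_span[OF cls_self[OF \<alpha>]] .
    ultimately show "z = z'" by (simp add: delta_def)
  qed
  show "(\<lambda>z::'k. \<lambda>x\<in>span \<alpha>. (\<lambda>p. z * x p)) ` UNIV = alg_Hom V0 E1 r s \<alpha> \<alpha>"
  proof
    show "(\<lambda>z::'k. \<lambda>x\<in>span \<alpha>. (\<lambda>p. z * x p)) ` UNIV \<subseteq> alg_Hom V0 E1 r s \<alpha> \<alpha>"
      using scal_Hom by blast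
    show "alg_Hom V0 E1 r s \<alpha> \<alpha> \<subseteq> (\<lambda>z::'k. \<lambda>x\<in>span \<alpha>. (\<lambda>p. z * x p)) ` UNIV"
    proof
      fix T :: "(('v,'e) gpath \<Rightarrow> 'k) \<Rightarrow> (('v,'e) gpath \<Rightarrow> 'k)"
      assume T: "T \<in> alg_Hom V0 E1 r s \<alpha> \<alpha>"
      show "T \<in> (\<lambda>z::'k. \<lambda>x\<in>span \<alpha>. (\<lambda>p. z * x p)) ` UNIV"
      proof (cases "\<exists>x\<in>span \<alpha>. T x \<noteq> (\<lambda>p. 0)")
        case True
        then show ?thesis using Hom_nz[OF T \<alpha> \<alpha>] by blast
      next
        case False
        then have "T = (\<lambda>x\<in>span \<alpha>. (\<lambda>p. 0 * x p))" using Hom_z[OF T] by simp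
        then show ?thesis by blast
      qed
    qed
  qed
qed

lemma partA3:
  assumes \<alpha>: "\<alpha> \<in> bd" and \<beta>: "\<beta> \<in> bd" and ne: "cls \<alpha> \<noteq> cls \<beta>"
  shows "alg_Hom V0 E1 r s \<alpha> \<beta> = {\<lambda>x\<in>span \<alpha>. (\<lambda>p. 0 :: 'k::field)}"
proof
  show "alg_Hom V0 E1 r s \<alpha> \<beta> \<subseteq> {\<lambda>x\<in>span \<alpha>. (\<lambda>p. 0 :: 'k::field)}"
  proof
    fix T :: "(('v,'e) gpath \<Rightarrow> 'k) \<Rightarrow> (('v,'e) gpath \<Rightarrow> 'k)"
    assume T: "T \<in> alg_Hom V0 E1 r s \<alpha> \<beta>"
    then have "\<not> (\<exists>x\<in>span \<alpha>. T x \<noteq> (\<lambda>p. 0))" using Hom_nz[OF T \<alpha> \<beta>] ne by blast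
    then show "T \<in> {\<lambda>x\<in>span \<alpha>. (\<lambda>p. 0 :: 'k::field)}" using Hom_z[OF T] by simp
  qed
  show "{\<lambda>x\<in>span \<alpha>. (\<lambda>p. 0 :: 'k::field)} \<subseteq> alg_Hom V0 E1 r s \<alpha> \<beta>" using zero_Hom by simp
qed

end


lemma fin_sqs:
  fixes x :: "'p \<Rightarrow> complex"
  assumes "finite {p. x p \<noteq> 0}" shows "sqs x"
proof -
  have "(\<lambda>p. (cmod (x p))\<^sup>2) summable_on {p. x p \<noteq> 0}" using assms by simp
  moreover have "(\<lambda>p. (cmod (x p))\<^sup>2) summable_on {p. x p \<noteq> 0} \<longleftrightarrow> (\<lambda>p. (cmod (x p))\<^sup>2) summable_on UNIV"
    by (rule summable_on_cong_neutral) auto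
  ultimately show ?thesis by blast
qed

lemma l2_I: "{p. x p \<noteq> 0} \<subseteq> A \<Longrightarrow> sqs x \<Longrightarrow> x \<in> l2_space A"
  unfolding l2_space_def by blast

lemma l2_D: "x \<in> l2_space A \<Longrightarrow> {p. x p \<noteq> 0} \<subseteq> A \<and> sqs x"
  unfolding l2_space_def by blast

lemma l2_mono: "A \<subseteq> B \<Longrightarrow> x \<in> l2_space A \<Longrightarrow> x \<in> l2_space B"
  unfolding l2_space_def by blast

lemma l2_fin: "finite {p. x p \<noteq> 0} \<Longrightarrow> {p. x p \<noteq> 0} \<subseteq> A \<Longrightarrow> x \<in> l2_space A"
  using l2_I fin_sqs by blast

lemma delta_l2: "p \<in> A \<Longrightarrow> delta p \<in> l2_space A"
  by (rule l2_fin) (auto simp: delta_def)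

lemma zero_l2: "(\<lambda>p. 0) \<in> l2_space A"
  by (rule l2_fin) auto

lemma l2_add: "x \<in> l2_space A \<Longrightarrow> y \<in> l2_space A \<Longrightarrow> (\<lambda>p. x p + y p) \<in> l2_space A"
proof -
  assume x: "x \<in> l2_space A" and y: "y \<in> l2_space A"
  have "{p. x p + y p \<noteq> 0} \<subseteq> {p. x p \<noteq> 0} \<union> {p. y p \<noteq> 0}" by auto
  then show ?thesis using x y sqs_add unfolding l2_space_def by blast
qed

lemma l2_mult: "x \<in> l2_space A \<Longrightarrow> (\<lambda>p. c * x p) \<in> l2_space A"
  unfolding l2_space_def using sqs_mult by fastforce

lemma l2norm_nonneg: "0 \<le> l2norm x"
  unfolding l2norm_def by (simp add: infsum_nonneg)

lemma l2norm_zero: "l2norm (\<lambda>p. 0 :: complex) = 0"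
  unfolding l2norm_def by simp

lemma point_le:
  fixes y :: "'p \<Rightarrow> complex"
  assumes "sqs y" shows "cmod (y q) \<le> l2norm y"
proof -
  have "sum (\<lambda>p. (cmod (y p))\<^sup>2) {q} \<le> infsum (\<lambda>p. (cmod (y p))\<^sup>2) UNIV"
    by (rule finite_sum_le_infsum) (use assms in auto)
  then have "(cmod (y q))\<^sup>2 \<le> infsum (\<lambda>p. (cmod (y p))\<^sup>2) UNIV" by simp
  then have "sqrt ((cmod (y q))\<^sup>2) \<le> l2norm y" unfolding l2norm_def using real_sqrt_le_mono by blast
  then show ?thesis by simp
qed

lemma l2norm_mult:
  fixes x :: "'p \<Rightarrow> complex"
  shows "l2norm (\<lambda>p. c * x p) = cmod c * l2norm x"
proof -
  have "infsum (\<lambda>p. (cmod (c * x p))\<^sup>2) UNIV = infsum (\<lambda>p. (cmod c)\<^sup>2 * (cmod (x p))\<^sup>2) UNIV"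
    by (simp add: norm_mult power_mult_distrib)
  also have "\<dots> = (cmod c)\<^sup>2 * infsum (\<lambda>p. (cmod (x p))\<^sup>2) UNIV"
  proof (cases "sqs x")
    case True then show ?thesis by (rule infsum_cmult_right)
  next
    case False
    show ?thesis
    proof (cases "c = 0")
      case True then show ?thesis by simp
    next
      case c: False
      have "\<not> (\<lambda>p. (cmod c)\<^sup>2 * (cmod (x p))\<^sup>2) summable_on UNIV"
      proof
        assume "(\<lambda>p. (cmod c)\<^sup>2 * (cmod (x p))\<^sup>2) summable_on UNIV"
        then have "(\<lambda>p. inverse ((cmod c)\<^sup>2) * ((cmod c)\<^sup>2 * (cmod (x p))\<^sup>2)) summable_on UNIV"
          by (rule summable_on_cmult_right)
        moreover have "(\<lambda>p. inverse ((cmod c)\<^sup>2) * ((cmod c)\<^sup>2 * (cmod (x p))\<^sup>2)) = (\<lambda>p. (cmod (x p))\<^sup>2)"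
          using c by (simp add: mult.assoc[symmetric])
        ultimately show False using False by simp
      qed
      then show ?thesis using False by (simp add: infsum_not_exists)
    qed
  qed
  finally show ?thesis unfolding l2norm_def by (simp add: real_sqrt_mult)
qed

lemma l2norm_delta: "l2norm (delta p :: ('v,'e) gpath \<Rightarrow> complex) = 1"
proof -
  have "infsum (\<lambda>q. (cmod (delta p q :: complex))\<^sup>2) UNIV = infsum (\<lambda>q. (cmod (delta p q :: complex))\<^sup>2) {p}"
    by (rule infsum_cong_neutral) (auto simp: delta_def)
  then show ?thesis unfolding l2norm_def by (simp add: delta_def)
qed

context G begin

abbreviation l2b where "l2b \<equiv> l2_space bd"
abbreviation l2c where "l2c \<alpha> \<equiv> l2_space (cls \<alpha>)"

lemma l2c_b: "x \<in> l2c \<alpha> \<Longrightarrow> x \<in> l2b"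
  using l2_mono cls_sub by blast

lemma reindex_cstar:
  assumes a: "a \<in> gen_alg V0 E1 r s"
    and aeq: "\<And>x. a x = (\<lambda>\<beta>. if \<beta> \<in> S then x (g \<beta>) else 0)"
    and inj: "inj_on g S"
  shows "a \<in> cstar_image V0 E1 r s"
proof -
  have lin: "lin_map_on l2b l2b a"
    unfolding lin_map_on_def
  proof (intro conjI ballI allI)
    show "a x \<in> l2b" if "x \<in> l2b" for x
      using that gen_supp[OF a closed_bd] gen_sqs[OF a] unfolding l2_space_def by blast
    show "a (\<lambda>p. x p + y p) = (\<lambda>p. a x p + a y p)" for x y using gen_lin[OF a] by blast
    show "a (\<lambda>p. c * x p) = (\<lambda>p. c * a x p)" for c x using gen_lin[OF a] by blast
  qed
  have bnd: "bounded_on l2b a"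
    unfolding bounded_on_def
  proof (intro exI[of _ 1] ballI)
    fix x assume "x \<in> l2b"
    then have "sqs x" using l2_D by blast
    then have "infsum (\<lambda>p. (cmod (a x p))\<^sup>2) UNIV \<le> infsum (\<lambda>p. (cmod (x p))\<^sup>2) UNIV"
      using reindex_sqs(2)[OF inj] unfolding aeq by blast
    then show "l2norm (a x) \<le> 1 * l2norm x" unfolding l2norm_def by simp
  qed
  have "\<forall>\<epsilon>>0. \<exists>b\<in>gen_alg V0 E1 r s. \<forall>x\<in>l2b. l2norm (\<lambda>p. a x p - b x p) \<le> \<epsilon> * l2norm x"
  proof (intro allI impI bexI[of _ a] ballI a)
    fix \<epsilon> :: real and x :: "('v,'e) gpath \<Rightarrow> complex" assume "\<epsilon> > 0"
    then have "0 \<le> \<epsilon> * l2norm x" using l2norm_nonneg[of x] by (intro mult_nonneg_nonneg) auto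
    then show "l2norm (\<lambda>p. a x p - a x p) \<le> \<epsilon> * l2norm x" by (simp add: l2norm_zero)
  qed
  then show ?thesis using lin bnd unfolding cstar_image_def by blast
qed

lemma op_p_cstar: "v \<in> V0 \<Longrightarrow> op_p s v \<in> cstar_image V0 E1 r s"
  by (rule reindex_cstar[OF gen_p op_p_alt inj_on_id])

lemma op_s_cstar: "e \<in> E1 \<Longrightarrow> op_s r s e \<in> cstar_image V0 E1 r s"
  by (rule reindex_cstar[OF gen_s op_s_alt inj_shift_Se])

lemma Q_cstar: "e \<in> E1 \<Longrightarrow> op_s r s e \<circ> op_sstar r s e \<in> cstar_image V0 E1 r s"
proof -
  assume e: "e \<in> E1"
  have h: "(op_s r s e \<circ> op_sstar r s e) x = (\<lambda>\<beta>. if \<beta> \<in> Se r s e then x (id \<beta>) else 0)"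
    for x :: "('v,'e) gpath \<Rightarrow> complex"
    unfolding id_apply by (rule Q_alt)
  show ?thesis by (rule reindex_cstar[OF Q_gen[OF e] h inj_on_id])
qed

end


lemma small_zero:
  fixes d :: complex
  assumes "\<And>\<epsilon>. \<epsilon> > 0 \<Longrightarrow> cmod d \<le> \<epsilon>" shows "d = 0"
proof (rule ccontr)
  assume "d \<noteq> 0"
  then have "cmod d > 0" by simp
  then have "cmod d \<le> cmod d / 2" using assms[of "cmod d / 2"] by simp
  then show False using \<open>cmod d > 0\<close> by simp
qed

context G begin

lemma cstar_l2c:
  assumes a: "a \<in> cstar_image V0 E1 r s" and x: "x \<in> l2c \<alpha>"
  shows "a x \<in> l2c \<alpha>"
proof -
  have xb: "x \<in> l2b" using l2c_b[OF x] .
  have lin: "lin_map_on l2b l2b a"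
    and apx: "\<forall>\<epsilon>>0. \<exists>b\<in>gen_alg V0 E1 r s. \<forall>x\<in>l2b. l2norm (\<lambda>p. a x p - b x p) \<le> \<epsilon> * l2norm x"
    using a unfolding cstar_image_def by auto
  have ax: "a x \<in> l2b" using lin xb unfolding lin_map_on_def by blast
  have sax: "sqs (a x)" using l2_D[OF ax] by blast
  have sx: "{p. x p \<noteq> 0} \<subseteq> cls \<alpha>" "sqs x" using l2_D[OF x] by auto
  have "{p. a x p \<noteq> 0} \<subseteq> cls \<alpha>"
  proof
    fix q assume q: "q \<in> {p. a x p \<noteq> 0}"
    show "q \<in> cls \<alpha>"
    proof (rule ccontr)
      assume nq: "q \<notin> cls \<alpha>"
      define m where "m = cmod (a x q)"
      define L where "L = l2norm x"
      have m: "m > 0" using q unfolding m_def by simp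
      have L: "L \<ge> 0" unfolding L_def by (rule l2norm_nonneg)
      define \<epsilon> where "\<epsilon> = m / (2 * (L + 1))"
      have \<epsilon>: "\<epsilon> > 0" unfolding \<epsilon>_def using m L by simp
      obtain b where b: "b \<in> gen_alg V0 E1 r s"
        and bb: "\<forall>x\<in>l2b. l2norm (\<lambda>p. a x p - b x p) \<le> \<epsilon> * l2norm x"
        using apx \<epsilon> by blast
      have "{p. b x p \<noteq> 0} \<subseteq> cls \<alpha>" using gen_supp[OF b closed_cls sx(1)] .
      then have bq: "b x q = 0" using nq by blast
      have sbx: "sqs (b x)" using gen_sqs[OF b sx(2)] .
      have "m = cmod (a x q - b x q)" unfolding m_def using bq by simp
      also have "\<dots> \<le> l2norm (\<lambda>p. a x p - b x p)"
        using point_le[OF sqs_diff[OF sax sbx]] by simp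
      also have "\<dots> \<le> \<epsilon> * L" using bb xb unfolding L_def by blast
      also have "\<dots> \<le> m / 2"
      proof -
        have "\<epsilon> * L = (m / 2) * (L / (L + 1))" unfolding \<epsilon>_def by (simp add: field_simps)
        also have "\<dots> \<le> (m / 2) * 1"
          using m L by (intro mult_left_mono) (auto simp: field_simps)
        finally show ?thesis by simp
      qed
      finally show False using m by simp
    qed
  qed
  then show ?thesis using sax by (rule l2_I)
qed

lemma cstar_hom:
  assumes a: "a \<in> cstar_image V0 E1 r s" and x: "x \<in> l2b"
  shows "a (\<lambda>p. c * x p) = (\<lambda>p. c * a x p)"
  using a x unfolding cstar_image_def lin_map_on_def by blast

lemma cstar_zero:
  assumes a: "a \<in> cstar_image V0 E1 r s"
  shows "a (\<lambda>p. 0) = (\<lambda>p. 0)"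
proof -
  have "a (\<lambda>p. 0 * (0::complex)) = (\<lambda>p. 0 * a (\<lambda>p. 0) p)"
    using cstar_hom[OF a zero_l2, of 0] by simp
  then show ?thesis by simp
qed

lemma partB1:
  assumes \<alpha>: "\<alpha> \<in> bd" and \<beta>: "\<beta> \<in> bd"
    and lin: "lin_map_on (l2c \<alpha>) (l2c \<beta>) T"
    and bnd: "bounded_on (l2c \<alpha>) T"
    and nz: "\<exists>x\<in>l2c \<alpha>. T x \<noteq> (\<lambda>p. 0)"
    and com: "\<forall>a\<in>cstar_image V0 E1 r s. \<forall>x\<in>l2c \<alpha>. T (a x) = a (T x)"
  shows "cls \<alpha> = cls \<beta> \<and> (\<exists>z. \<forall>x\<in>l2c \<alpha>. T x = (\<lambda>p. z * x p))"
proof -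
  have T0: "T (\<lambda>p. 0) = (\<lambda>p. 0)" using lin_zero[OF lin zero_l2] .
  have Tl2: "T x \<in> l2c \<beta>" if "x \<in> l2c \<alpha>" for x using lin that unfolding lin_map_on_def by blast
  have supp: "T x q = 0" if "x \<in> l2c \<alpha>" "q \<notin> bd" for x q
    using l2_D[OF Tl2[OF that(1)]] that(2) cls_sub by blast
  obtain z where z: "\<forall>p \<in> cls \<alpha>. T (delta p) = (\<lambda>q. z * delta p q)"
  proof -
    have "\<exists>z. \<forall>p \<in> cls \<alpha>. T (delta p) = (\<lambda>q. z * delta p q)"
    proof (rule delta_eigen[OF \<alpha>, of "l2c \<alpha>" T])
      show "delta p \<in> l2c \<alpha>" if "p \<in> cls \<alpha>" for p using delta_l2 that .
      show "T (\<lambda>p. 0) = (\<lambda>p. 0)" using T0 .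
      show "T x q = 0" if "x \<in> l2c \<alpha>" "q \<notin> bd" for x q using supp that .
      show "T (op_p s v x) = op_p s v (T x)" if "v \<in> V0" "x \<in> l2c \<alpha>" for v x
        using com[rule_format, OF op_p_cstar[OF that(1)] that(2)] .
      show "T (op_s r s e x) = op_s r s e (T x)" if "e \<in> E1" "x \<in> l2c \<alpha>" for e x
        using com[rule_format, OF op_s_cstar[OF that(1)] that(2)] .
      show "T ((op_s r s e \<circ> op_sstar r s e) x) = (op_s r s e \<circ> op_sstar r s e) (T x)"
        if "e \<in> E1" "x \<in> l2c \<alpha>" for e x
        using com[rule_format, OF Q_cstar[OF that(1)] that(2)] .
    qed
    then show ?thesis using that by blast
  qed
  have Tzf: "T x = (\<lambda>p. z * x p)" if "finite {p. x p \<noteq> 0}" "{p. x p \<noteq> 0} \<subseteq> cls \<alpha>" for x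
    by (rule fin_lin[OF lin l2_fin _ T0]) (use z that in auto)
  obtain C0 where C0: "\<forall>x\<in>l2c \<alpha>. l2norm (T x) \<le> C0 * l2norm x"
    using bnd unfolding bounded_on_def by blast
  have Tz: "T x = (\<lambda>p. z * x p)" if x: "x \<in> l2c \<alpha>" for x
  proof (rule ext)
    fix q
    have sx: "{p. x p \<noteq> 0} \<subseteq> cls \<alpha>" "sqs x" using l2_D[OF x] by auto
    define K where "K = \<bar>C0\<bar> + cmod z + 1"
    have K: "K > 0" unfolding K_def by (simp add: add_nonneg_pos)
    define f where "f = (\<lambda>p. (cmod (x p))\<^sup>2)"
    have fU: "f summable_on UNIV" using sx(2) unfolding f_def .
    have "cmod (T x q - z * x q) \<le> \<epsilon>" if \<epsilon>: "\<epsilon> > 0" for \<epsilon>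
    proof -
      define \<delta> where "\<delta> = (\<epsilon> / K)\<^sup>2"
      have \<delta>: "\<delta> > 0" unfolding \<delta>_def using \<epsilon> K by simp
      obtain F where F: "finite F" "dist (sum f F) (infsum f UNIV) \<le> \<delta>"
        using infsum_finite_approximation[OF fU \<delta>] by blast
      have fC: "f summable_on (- F)" using summable_on_subset_banach[OF fU] by blast
      have "infsum f UNIV = infsum f (F \<union> - F)" by simp
      also have "\<dots> = infsum f F + infsum f (- F)"
        by (rule infsum_Un_disjoint) (use F(1) fC in auto)
      finally have "infsum f (- F) = infsum f UNIV - sum f F" using F(1) by simp
      then have tail: "infsum f (- F) \<le> \<delta>" using F(2) by (simp add: dist_real_def)
      define xF where "xF = (\<lambda>p. if p \<in> F then x p else 0)"
      define y where "y = (\<lambda>p. if p \<in> - F then x p else 0)"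
      have xF: "xF \<in> l2c \<alpha>"
        by (rule l2_fin) (use F(1) sx(1) in \<open>auto simp: xF_def intro: finite_subset\<close>)
      have y: "y \<in> l2c \<alpha>"
        by (rule l2_I) (use sx sqs_restrict[OF sx(2), of "- F"] in \<open>auto simp: y_def\<close>)
      have TxF: "T xF = (\<lambda>p. z * xF p)"
        by (rule Tzf) (use F(1) sx(1) in \<open>auto simp: xF_def intro: finite_subset\<close>)
      have xs: "x = (\<lambda>p. xF p + y p)" unfolding xF_def y_def by auto
      have Tx: "T x = (\<lambda>p. T xF p + T y p)" using lin xF y xs unfolding lin_map_on_def by metis
      have "infsum (\<lambda>p. (cmod (y p))\<^sup>2) UNIV = infsum f (- F)"
        by (rule infsum_cong_neutral) (auto simp: y_def f_def)
      then have ny: "l2norm y \<le> \<epsilon> / K"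
        unfolding l2norm_def using tail \<delta>_def
        by (metis K \<epsilon> divide_pos_pos less_le real_sqrt_le_mono real_sqrt_unique)
      have e1: "T x q = T xF q + T y q" using Tx by (rule fun_cong)
      have e2: "x q = xF q + y q" using xs by (rule fun_cong)
      have e3: "T xF q = z * xF q" using TxF by (rule fun_cong)
      have "T x q - z * x q = T y q - z * y q" unfolding e1 e2 e3 by (simp add: algebra_simps)
      then have "cmod (T x q - z * x q) \<le> cmod (T y q) + cmod z * cmod (y q)"
        by (metis norm_mult norm_triangle_ineq4)
      also have "\<dots> \<le> \<bar>C0\<bar> * l2norm y + cmod z * l2norm y"
      proof (rule add_mono)
        have "cmod (T y q) \<le> l2norm (T y)" using point_le[of "T y" q] l2_D[OF Tl2[OF y]] by blast
        also have "\<dots> \<le> C0 * l2norm y" using C0 y by blast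
        also have "\<dots> \<le> \<bar>C0\<bar> * l2norm y" using l2norm_nonneg[of y] by (intro mult_right_mono) auto
        finally show "cmod (T y q) \<le> \<bar>C0\<bar> * l2norm y" .
        show "cmod z * cmod (y q) \<le> cmod z * l2norm y"
          using point_le[of y q] l2_D[OF y] by (intro mult_left_mono) auto
      qed
      also have "\<dots> \<le> K * l2norm y" unfolding K_def using l2norm_nonneg[of y]
        by (simp add: distrib_right)
      also have "\<dots> \<le> K * (\<epsilon> / K)" using ny K by (intro mult_left_mono) auto
      also have "\<dots> = \<epsilon>" using K by simp
      finally show ?thesis .
    qed
    then show "T x q = z * x q" using small_zero[of "T x q - z * x q"] by simp
  qed
  have "z \<noteq> 0" using nz Tz by auto
  have "T (delta \<alpha>) \<in> l2c \<beta>" using Tl2 delta_l2 cls_self[OF \<alpha>] by blast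
  moreover have "T (delta \<alpha>) \<alpha> \<noteq> 0" using z cls_self[OF \<alpha>] \<open>z \<noteq> 0\<close> by (simp add: delta_def)
  ultimately have "\<alpha> \<in> cls \<beta>" using l2_D by blast
  then have "cls \<alpha> = cls \<beta>" using cls_eq \<alpha> by blast
  then show ?thesis using Tz by blast
qed

end


context G begin

lemma scal_cHom:
  "(\<lambda>x\<in>l2c \<alpha>. (\<lambda>p. (z::complex) * x p)) \<in> cstar_Hom V0 E1 r s \<alpha> \<alpha>"
proof -
  let ?T = "(\<lambda>x\<in>l2c \<alpha>. (\<lambda>p. z * x p))"
  have "lin_map_on (l2c \<alpha>) (l2c \<alpha>) ?T"
    unfolding lin_map_on_def
  proof (intro conjI ballI allI)
    show "?T x \<in> l2c \<alpha>" if "x \<in> l2c \<alpha>" for x using that l2_mult by simp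
    show "?T (\<lambda>p. x p + y p) = (\<lambda>p. ?T x p + ?T y p)" if "x \<in> l2c \<alpha>" "y \<in> l2c \<alpha>" for x y
      using that l2_add[OF that] by (simp add: algebra_simps)
    show "?T (\<lambda>p. c * x p) = (\<lambda>p. c * ?T x p)" if "x \<in> l2c \<alpha>" for c x
      using that l2_mult[OF that, of c] by (simp add: algebra_simps)
  qed
  moreover have "bounded_on (l2c \<alpha>) ?T"
    unfolding bounded_on_def by (intro exI[of _ "cmod z"]) (simp add: l2norm_mult)
  moreover have "?T (a x) = a (?T x)" if "a \<in> cstar_image V0 E1 r s" "x \<in> l2c \<alpha>" for a x
    using that cstar_l2c[OF that] cstar_hom[OF that(1) l2c_b[OF that(2)]] by simp
  ultimately show ?thesis unfolding cstar_Hom_def by auto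
qed

lemma zero_cHom:
  "(\<lambda>x\<in>l2c \<alpha>. (\<lambda>p. 0)) \<in> cstar_Hom V0 E1 r s \<alpha> \<beta>"
proof -
  let ?T = "(\<lambda>x\<in>l2c \<alpha>. (\<lambda>p. 0 :: complex))"
  have "lin_map_on (l2c \<alpha>) (l2c \<beta>) ?T"
    unfolding lin_map_on_def
  proof (intro conjI ballI allI)
    show "?T x \<in> l2c \<beta>" if "x \<in> l2c \<alpha>" for x using that zero_l2 by simp
    show "?T (\<lambda>p. x p + y p) = (\<lambda>p. ?T x p + ?T y p)" if "x \<in> l2c \<alpha>" "y \<in> l2c \<alpha>" for x y
      using that l2_add[OF that] by simp
    show "?T (\<lambda>p. c * x p) = (\<lambda>p. c * ?T x p)" if "x \<in> l2c \<alpha>" for c x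
      using that l2_mult[OF that, of c] by simp
  qed
  moreover have "bounded_on (l2c \<alpha>) ?T"
    unfolding bounded_on_def by (intro exI[of _ 0]) (simp add: l2norm_zero)
  moreover have "?T (a x) = a (?T x)" if "a \<in> cstar_image V0 E1 r s" "x \<in> l2c \<alpha>" for a x
    using that cstar_l2c[OF that] cstar_zero[OF that(1)] by simp
  ultimately show ?thesis unfolding cstar_Hom_def by auto
qed

lemma cHom_nz:
  assumes "T \<in> cstar_Hom V0 E1 r s \<alpha> \<beta>" "\<alpha> \<in> bd" "\<beta> \<in> bd"
  shows "(\<exists>x\<in>l2c \<alpha>. T x \<noteq> (\<lambda>p. 0)) \<longrightarrow> cls \<alpha> = cls \<beta> \<and> (\<exists>z. T = (\<lambda>x\<in>l2c \<alpha>. (\<lambda>p. z * x p)))"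
proof
  assume nz: "\<exists>x\<in>l2c \<alpha>. T x \<noteq> (\<lambda>p. 0)"
  have lin: "lin_map_on (l2c \<alpha>) (l2c \<beta>) T"
    and bnd: "bounded_on (l2c \<alpha>) T"
    and com: "\<forall>a\<in>cstar_image V0 E1 r s. \<forall>x\<in>l2c \<alpha>. T (a x) = a (T x)"
    and ext: "T \<in> extensional (l2c \<alpha>)" using assms(1) unfolding cstar_Hom_def by auto
  obtain z where "cls \<alpha> = cls \<beta>" "\<forall>x\<in>l2c \<alpha>. T x = (\<lambda>p. z * x p)"
    using partB1[OF assms(2,3) lin bnd nz com] by blast
  moreover have "T = (\<lambda>x\<in>l2c \<alpha>. (\<lambda>p. z * x p))"
    using calculation(2) ext by (auto simp: fun_eq_iff extensional_def)
  ultimately show "cls \<alpha> = cls \<beta> \<and> (\<exists>z. T = (\<lambda>x\<in>l2c \<alpha>. (\<lambda>p. z * x p)))" by blast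
qed

lemma cHom_z:
  assumes "T \<in> cstar_Hom V0 E1 r s \<alpha> \<beta>" "\<not> (\<exists>x\<in>l2c \<alpha>. T x \<noteq> (\<lambda>p. 0))"
  shows "T = (\<lambda>x\<in>l2c \<alpha>. (\<lambda>p. 0))"
  using assms unfolding cstar_Hom_def by (auto simp: fun_eq_iff extensional_def)

lemma scal_inj:
  assumes \<alpha>: "\<alpha> \<in> bd"
  shows "inj_on (\<lambda>z::complex. \<lambda>x\<in>l2c \<alpha>. (\<lambda>p. z * x p)) A"
proof (rule inj_onI)
  fix z z' :: complex
  assume "(\<lambda>x\<in>l2c \<alpha>. (\<lambda>p. z * x p)) = (\<lambda>x\<in>l2c \<alpha>. (\<lambda>p. z' * x p))"
  then have "(\<lambda>x\<in>l2c \<alpha>. (\<lambda>p. z * x p)) (delta \<alpha>) \<alpha> = (\<lambda>x\<in>l2c \<alpha>. (\<lambda>p. z' * x p)) (delta \<alpha>) \<alpha>"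
    by simp
  moreover have "(delta \<alpha> :: ('v,'e) gpath \<Rightarrow> complex) \<in> l2c \<alpha>" using delta_l2[OF cls_self[OF \<alpha>]] .
  ultimately show "z = z'" by (simp add: delta_def)
qed

lemma cHom_img:
  assumes \<alpha>: "\<alpha> \<in> bd"
  shows "(\<lambda>z::complex. \<lambda>x\<in>l2c \<alpha>. (\<lambda>p. z * x p)) ` UNIV = cstar_Hom V0 E1 r s \<alpha> \<alpha>"
proof
  show "(\<lambda>z::complex. \<lambda>x\<in>l2c \<alpha>. (\<lambda>p. z * x p)) ` UNIV \<subseteq> cstar_Hom V0 E1 r s \<alpha> \<alpha>"
    using scal_cHom by blast
  show "cstar_Hom V0 E1 r s \<alpha> \<alpha> \<subseteq> (\<lambda>z::complex. \<lambda>x\<in>l2c \<alpha>. (\<lambda>p. z * x p)) ` UNIV"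
  proof
    fix T assume T: "T \<in> cstar_Hom V0 E1 r s \<alpha> \<alpha>"
    show "T \<in> (\<lambda>z::complex. \<lambda>x\<in>l2c \<alpha>. (\<lambda>p. z * x p)) ` UNIV"
    proof (cases "\<exists>x\<in>l2c \<alpha>. T x \<noteq> (\<lambda>p. 0)")
      case True
      then show ?thesis using cHom_nz[OF T \<alpha> \<alpha>] by blast
    next
      case False
      then have "T = (\<lambda>x\<in>l2c \<alpha>. (\<lambda>p. 0 * x p))" using cHom_z[OF T] by simp
      then show ?thesis by blast
    qed
  qed
qed

lemma partB2:
  assumes \<alpha>: "\<alpha> \<in> bd"
  shows "bij_betw (\<lambda>z::complex. \<lambda>x\<in>l2c \<alpha>. (\<lambda>p. z * x p)) UNIV (cstar_Hom V0 E1 r s \<alpha> \<alpha>)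
    \<and> bij_betw (\<lambda>z::complex. \<lambda>x\<in>l2c \<alpha>. (\<lambda>p. z * x p)) {z. cmod z = 1} (cstar_Unitary V0 E1 r s \<alpha>)"
proof
  show "bij_betw (\<lambda>z::complex. \<lambda>x\<in>l2c \<alpha>. (\<lambda>p. z * x p)) UNIV (cstar_Hom V0 E1 r s \<alpha> \<alpha>)"
    unfolding bij_betw_def using scal_inj[OF \<alpha>] cHom_img[OF \<alpha>] by blast
  show "bij_betw (\<lambda>z::complex. \<lambda>x\<in>l2c \<alpha>. (\<lambda>p. z * x p)) {z. cmod z = 1} (cstar_Unitary V0 E1 r s \<alpha>)"
    unfolding bij_betw_def
  proof (intro conjI)
    show "inj_on (\<lambda>z::complex. \<lambda>x\<in>l2c \<alpha>. (\<lambda>p. z * x p)) {z. cmod z = 1}" using scal_inj[OF \<alpha>] .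
    show "(\<lambda>z::complex. \<lambda>x\<in>l2c \<alpha>. (\<lambda>p. z * x p)) ` {z. cmod z = 1} = cstar_Unitary V0 E1 r s \<alpha>"
    proof
      show "(\<lambda>z::complex. \<lambda>x\<in>l2c \<alpha>. (\<lambda>p. z * x p)) ` {z. cmod z = 1} \<subseteq> cstar_Unitary V0 E1 r s \<alpha>"
      proof
        fix T assume "T \<in> (\<lambda>z::complex. \<lambda>x\<in>l2c \<alpha>. (\<lambda>p. z * x p)) ` {z. cmod z = 1}"
        then obtain z :: complex where z: "cmod z = 1" and T: "T = (\<lambda>x\<in>l2c \<alpha>. (\<lambda>p. z * x p))" by blast
        have z0: "z \<noteq> 0" using z by auto
        have "T ` l2c \<alpha> = l2c \<alpha>"
        proof
          show "T ` l2c \<alpha> \<subseteq> l2c \<alpha>" using T l2_mult by auto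
          show "l2c \<alpha> \<subseteq> T ` l2c \<alpha>"
          proof
            fix x assume x: "x \<in> l2c \<alpha>"
            have y: "(\<lambda>p. inverse z * x p) \<in> l2c \<alpha>" using l2_mult[OF x] .
            have "T (\<lambda>p. inverse z * x p) = x" using T y z0 by (simp add: fun_eq_iff)
            then show "x \<in> T ` l2c \<alpha>" using y by (metis image_eqI)
          qed
        qed
        moreover have "\<forall>x\<in>l2c \<alpha>. l2norm (T x) = l2norm x" using T z by (simp add: l2norm_mult)
        moreover have "T \<in> cstar_Hom V0 E1 r s \<alpha> \<alpha>" using T scal_cHom by simp
        ultimately show "T \<in> cstar_Unitary V0 E1 r s \<alpha>" unfolding cstar_Unitary_def by blast
      qed
      show "cstar_Unitary V0 E1 r s \<alpha> \<subseteq> (\<lambda>z::complex. \<lambda>x\<in>l2c \<alpha>. (\<lambda>p. z * x p)) ` {z. cmod z = 1}"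
      proof
        fix T assume T: "T \<in> cstar_Unitary V0 E1 r s \<alpha>"
        then have "T \<in> cstar_Hom V0 E1 r s \<alpha> \<alpha>" unfolding cstar_Unitary_def by blast
        then obtain z :: complex where Tz: "T = (\<lambda>x\<in>l2c \<alpha>. (\<lambda>p. z * x p))" using cHom_img[OF \<alpha>] by blast
        have d: "(delta \<alpha> :: ('v,'e) gpath \<Rightarrow> complex) \<in> l2c \<alpha>" using delta_l2[OF cls_self[OF \<alpha>]] .
        then have "l2norm (T (delta \<alpha>)) = l2norm (delta \<alpha> :: ('v,'e) gpath \<Rightarrow> complex)"
          using T unfolding cstar_Unitary_def by blast
        then have "cmod z = 1" using Tz d by (simp add: l2norm_mult l2norm_delta)
        then show "T \<in> (\<lambda>z::complex. \<lambda>x\<in>l2c \<alpha>. (\<lambda>p. z * x p)) ` {z. cmod z = 1}" using Tz by blast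
      qed
    qed
  qed
qed

lemma partB3:
  assumes \<alpha>: "\<alpha> \<in> bd" and \<beta>: "\<beta> \<in> bd" and ne: "cls \<alpha> \<noteq> cls \<beta>"
  shows "cstar_Hom V0 E1 r s \<alpha> \<beta> = {\<lambda>x\<in>l2c \<alpha>. (\<lambda>p. 0)}"
proof
  show "cstar_Hom V0 E1 r s \<alpha> \<beta> \<subseteq> {\<lambda>x\<in>l2c \<alpha>. (\<lambda>p. 0)}"
  proof
    fix T assume T: "T \<in> cstar_Hom V0 E1 r s \<alpha> \<beta>"
    then have "\<not> (\<exists>x\<in>l2c \<alpha>. T x \<noteq> (\<lambda>p. 0))" using cHom_nz[OF T \<alpha> \<beta>] ne by blast
    then show "T \<in> {\<lambda>x\<in>l2c \<alpha>. (\<lambda>p. 0)}" using cHom_z[OF T] by simp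
  qed
  show "{\<lambda>x\<in>l2c \<alpha>. (\<lambda>p. 0)} \<subseteq> cstar_Hom V0 E1 r s \<alpha> \<beta>" using zero_cHom by simp
qed

end


theorem proposition3p13:
  fixes V0 :: "'v set" and E1 :: "'e set" and r s :: "'e \<Rightarrow> 'v"
  assumes "r ` E1 \<subseteq> V0" and "s ` E1 \<subseteq> V0"
  shows
  "(\<forall>\<alpha>\<in>boundary_paths V0 E1 r s. \<forall>\<beta>\<in>boundary_paths V0 E1 r s.
      \<forall>T :: (('v,'e) gpath \<Rightarrow> 'k::field) \<Rightarrow> (('v,'e) gpath \<Rightarrow> 'k).
        lin_map_on (span_space V0 E1 r s \<alpha>) (span_space V0 E1 r s \<beta>) T
        \<and> (\<exists>x\<in>span_space V0 E1 r s \<alpha>. T x \<noteq> (\<lambda>p. 0))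
        \<and> (\<forall>a\<in>gen_alg V0 E1 r s. \<forall>x\<in>span_space V0 E1 r s \<alpha>. T (a x) = a (T x))
        \<longrightarrow> tail_class V0 E1 r s \<alpha> = tail_class V0 E1 r s \<beta>
            \<and> (\<exists>z::'k. \<forall>x\<in>span_space V0 E1 r s \<alpha>. T x = (\<lambda>p. z * x p)))
   \<and> (\<forall>\<alpha>\<in>boundary_paths V0 E1 r s.
        bij_betw (\<lambda>z::'k. \<lambda>x\<in>span_space V0 E1 r s \<alpha>. (\<lambda>p. z * x p)) UNIV (alg_Hom V0 E1 r s \<alpha> \<alpha>))
   \<and> (\<forall>\<alpha>\<in>boundary_paths V0 E1 r s. \<forall>\<beta>\<in>boundary_paths V0 E1 r s.
        tail_class V0 E1 r s \<alpha> \<noteq> tail_class V0 E1 r s \<beta> \<longrightarrow>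
          alg_Hom V0 E1 r s \<alpha> \<beta> = {\<lambda>x\<in>span_space V0 E1 r s \<alpha>. (\<lambda>p. 0 :: 'k)})
   \<and> (\<forall>\<alpha>\<in>boundary_paths V0 E1 r s. \<forall>\<beta>\<in>boundary_paths V0 E1 r s.
      \<forall>T. lin_map_on (l2_space (tail_class V0 E1 r s \<alpha>)) (l2_space (tail_class V0 E1 r s \<beta>)) T
        \<and> bounded_on (l2_space (tail_class V0 E1 r s \<alpha>)) T
        \<and> (\<exists>x\<in>l2_space (tail_class V0 E1 r s \<alpha>). T x \<noteq> (\<lambda>p. 0))
        \<and> (\<forall>a\<in>cstar_image V0 E1 r s. \<forall>x\<in>l2_space (tail_class V0 E1 r s \<alpha>). T (a x) = a (T x))
        \<longrightarrow> tail_class V0 E1 r s \<alpha> = tail_class V0 E1 r s \<beta>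
            \<and> (\<exists>z::complex. \<forall>x\<in>l2_space (tail_class V0 E1 r s \<alpha>). T x = (\<lambda>p. z * x p)))
   \<and> (\<forall>\<alpha>\<in>boundary_paths V0 E1 r s.
        bij_betw (\<lambda>z::complex. \<lambda>x\<in>l2_space (tail_class V0 E1 r s \<alpha>). (\<lambda>p. z * x p))
          UNIV (cstar_Hom V0 E1 r s \<alpha> \<alpha>)
      \<and> bij_betw (\<lambda>z::complex. \<lambda>x\<in>l2_space (tail_class V0 E1 r s \<alpha>). (\<lambda>p. z * x p))
          {z. cmod z = 1} (cstar_Unitary V0 E1 r s \<alpha>))
   \<and> (\<forall>\<alpha>\<in>boundary_paths V0 E1 r s. \<forall>\<beta>\<in>boundary_paths V0 E1 r s.
        tail_class V0 E1 r s \<alpha> \<noteq> tail_class V0 E1 r s \<beta> \<longrightarrow>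
          cstar_Hom V0 E1 r s \<alpha> \<beta> = {\<lambda>x\<in>l2_space (tail_class V0 E1 r s \<alpha>). (\<lambda>p. 0)})"
  proof -
  interpret G V0 E1 r s by unfold_locales (use assms in auto)
  have h1: "\<forall>\<alpha>\<in>boundary_paths V0 E1 r s. \<forall>\<beta>\<in>boundary_paths V0 E1 r s.
      \<forall>T :: (('v,'e) gpath \<Rightarrow> 'k::field) \<Rightarrow> (('v,'e) gpath \<Rightarrow> 'k).
        lin_map_on (span_space V0 E1 r s \<alpha>) (span_space V0 E1 r s \<beta>) T
        \<and> (\<exists>x\<in>span_space V0 E1 r s \<alpha>. T x \<noteq> (\<lambda>p. 0))
        \<and> (\<forall>a\<in>gen_alg V0 E1 r s. \<forall>x\<in>span_space V0 E1 r s \<alpha>. T (a x) = a (T x))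
        \<longrightarrow> tail_class V0 E1 r s \<alpha> = tail_class V0 E1 r s \<beta>
            \<and> (\<exists>z::'k. \<forall>x\<in>span_space V0 E1 r s \<alpha>. T x = (\<lambda>p. z * x p))"
    using partA1 by blast
  have h2: "\<forall>\<alpha>\<in>boundary_paths V0 E1 r s.
        bij_betw (\<lambda>z::'k. \<lambda>x\<in>span_space V0 E1 r s \<alpha>. (\<lambda>p. z * x p)) UNIV (alg_Hom V0 E1 r s \<alpha> \<alpha>)"
    using partA2 by blast
  have h3: "\<forall>\<alpha>\<in>boundary_paths V0 E1 r s. \<forall>\<beta>\<in>boundary_paths V0 E1 r s.
        tail_class V0 E1 r s \<alpha> \<noteq> tail_class V0 E1 r s \<beta> \<longrightarrow>
          alg_Hom V0 E1 r s \<alpha> \<beta> = {\<lambda>x\<in>span_space V0 E1 r s \<alpha>. (\<lambda>p. 0 :: 'k)}"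
    using partA3 by blast
  have h4: "\<forall>\<alpha>\<in>boundary_paths V0 E1 r s. \<forall>\<beta>\<in>boundary_paths V0 E1 r s.
      \<forall>T. lin_map_on (l2_space (tail_class V0 E1 r s \<alpha>)) (l2_space (tail_class V0 E1 r s \<beta>)) T
        \<and> bounded_on (l2_space (tail_class V0 E1 r s \<alpha>)) T
        \<and> (\<exists>x\<in>l2_space (tail_class V0 E1 r s \<alpha>). T x \<noteq> (\<lambda>p. 0))
        \<and> (\<forall>a\<in>cstar_image V0 E1 r s. \<forall>x\<in>l2_space (tail_class V0 E1 r s \<alpha>). T (a x) = a (T x))
        \<longrightarrow> tail_class V0 E1 r s \<alpha> = tail_class V0 E1 r s \<beta>
            \<and> (\<exists>z::complex. \<forall>x\<in>l2_space (tail_class V0 E1 r s \<alpha>). T x = (\<lambda>p. z * x p))"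
    using partB1 by blast
  have h5: "\<forall>\<alpha>\<in>boundary_paths V0 E1 r s.
        bij_betw (\<lambda>z::complex. \<lambda>x\<in>l2_space (tail_class V0 E1 r s \<alpha>). (\<lambda>p. z * x p))
          UNIV (cstar_Hom V0 E1 r s \<alpha> \<alpha>)
      \<and> bij_betw (\<lambda>z::complex. \<lambda>x\<in>l2_space (tail_class V0 E1 r s \<alpha>). (\<lambda>p. z * x p))
          {z. cmod z = 1} (cstar_Unitary V0 E1 r s \<alpha>)"
    using partB2 by blast
  have h6: "\<forall>\<alpha>\<in>boundary_paths V0 E1 r s. \<forall>\<beta>\<in>boundary_paths V0 E1 r s.
        tail_class V0 E1 r s \<alpha> \<noteq> tail_class V0 E1 r s \<beta> \<longrightarrow>
          cstar_Hom V0 E1 r s \<alpha> \<beta> = {\<lambda>x\<in>l2_space (tail_class V0 E1 r s \<alpha>). (\<lambda>p. 0)}"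
    using partB3 by blast
  show ?thesis by (intro conjI h1 h2 h3 h4 h5 h6)
qed

end
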